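(* For every finite connected graph $G=(V,E)$ with root $O$ and every $\mathbf p=(p_e)_{e\in E}\in(0,1]^E$, the stochastic search game $\langle G,O,\mathbf p\rangle$ has a value $\mathrm{val}(\mathbf p)$, and both players have optimal strategies.
   Context: Stochastic search game $\langle G,O,\mathbf p\rangle$: let $G=(V,E)$ be a finite connected undirected graph with unit-length edges and root $O\in V$, and let $\mathbf p=(p_e)_{e\in E}\in(0,1]^E$. At each stage $t\ge1$ a random set $E_t\subseteq E$ of active edges is drawn: each edge $e$ is active with probability $p_e$, independently across edges and stages. The game is zero-sum between a hider (the maximizer) and a searcher (the minimizer). - At stage $0$ the hider chooses an edge $e\in E$ and stays there forever. His mixed strategies are distributions on $E$. - The searcher starts at $v_0=O$. At each stage $t\ge1$ she has observed $E_1,\dots,E_t$ and her past positions. She then either stays at $v_{t-1}$ or traverses an active edge (an edge of $E_t$) incident to $v_{t-1}$, arriving at $v_t$. Randomized (behavior) strategies are allowed. - The payoff to the hider, against a searcher strategy $\sigma$, is $g(e,\sigma)=\mathbb E_\sigma[\inf\{t\ge1:\text{the searcher traverses } e \text{ at stage } t\}]$, with $\inf\emptyset=+\infty$. It is extended linearly to mixed strategies of the hider. *)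

theory Defs
  imports "HOL-Probability.Probability"
begin

definition graph_ok :: "'v set \<Rightarrow> 'v set set \<Rightarrow> 'v \<Rightarrow> bool" where
  "graph_ok V E r \<longleftrightarrow> finite V \<and> r \<in> V \<and>
     E \<subseteq> {{u, w} | u w. u \<in> V \<and> w \<in> V \<and> u \<noteq> w} \<and>
     (\<forall>v\<in>V. (r, v) \<in> {(u, w). {u, w} \<in> E}\<^sup>*)"

definition active_pmf :: "'v set set \<Rightarrow> ('v set \<Rightarrow> real) \<Rightarrow> 'v set set pmf" where
  "active_pmf E p = map_pmf (\<lambda>f. {e \<in> E. f e}) (Pi_pmf E False (\<lambda>e. bernoulli_pmf (p e)))"

(* A history after t stages: the list [(E_1,v_1),...,(E_t,v_t)]. *)
type_synonym 'v hist = "('v set set \<times> 'v) list"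

definition cur_pos :: "'v \<Rightarrow> 'v hist \<Rightarrow> 'v" where
  "cur_pos r h = (if h = [] then r else snd (last h))"

(* Behaviour strategy of the searcher: given past history (E_1,v_1),...,(E_{t-1},v_{t-1})
   and the current active set E_t, a distribution over the new position v_t. *)
type_synonym 'v strat = "'v hist \<Rightarrow> 'v set set \<Rightarrow> 'v pmf"

definition searcher_strategy :: "'v set set \<Rightarrow> 'v \<Rightarrow> 'v strat \<Rightarrow> bool" where
  "searcher_strategy E r \<sigma> \<longleftrightarrow>
     (\<forall>h A. A \<subseteq> E \<longrightarrow>
        set_pmf (\<sigma> h A) \<subseteq> insert (cur_pos r h) {w. {cur_pos r h, w} \<in> A})"

fun hist_pmf :: "'v set set \<Rightarrow> ('v set \<Rightarrow> real) \<Rightarrow> 'v strat \<Rightarrow> nat \<Rightarrow> 'v hist pmf" where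
  "hist_pmf E p \<sigma> 0 = return_pmf []"
| "hist_pmf E p \<sigma> (Suc t) =
     bind_pmf (hist_pmf E p \<sigma> t) (\<lambda>h.
     bind_pmf (active_pmf E p) (\<lambda>A.
     map_pmf (\<lambda>v. h @ [(A, v)]) (\<sigma> h A)))"

fun traversed :: "'v \<Rightarrow> 'v hist \<Rightarrow> 'v set set" where
  "traversed u [] = {}"
| "traversed u ((A, w) # h) = (if u = w then {} else {{u, w}}) \<union> traversed w h"

(* g(e,\<sigma>) = E[T_e] = \<Sum>_{t\<ge>0} P(T_e > t), where T_e is the first stage at which e is
   traversed (T_e = \<infinity> if never).  P(T_e > t) = P(e not traversed during stages 1..t). *)
definition payoff :: "'v set set \<Rightarrow> 'v \<Rightarrow> ('v set \<Rightarrow> real) \<Rightarrow> 'v set \<Rightarrow> 'v strat \<Rightarrow> ennreal" where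
  "payoff E r p e \<sigma> =
     (\<Sum>t. ennreal (measure_pmf.prob (hist_pmf E p \<sigma> t) {h. e \<notin> traversed r h}))"

definition mixed_payoff :: "'v set set \<Rightarrow> 'v \<Rightarrow> ('v set \<Rightarrow> real) \<Rightarrow> 'v set pmf \<Rightarrow> 'v strat \<Rightarrow> ennreal" where
  "mixed_payoff E r p x \<sigma> = (\<Sum>e\<in>E. ennreal (pmf x e) * payoff E r p e \<sigma>)"

definition hider_strategy :: "'v set set \<Rightarrow> 'v set pmf \<Rightarrow> bool" where
  "hider_strategy E x \<longleftrightarrow> set_pmf x \<subseteq> E"

end

theory Submission
  imports Defs "HOL-Library.Diagonal_Subsequence"
begin

lemma bw_finite:
  fixes f :: "nat \<Rightarrow> 'a \<Rightarrow> real"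
  assumes "finite F" "\<forall>k. \<forall>e\<in>F. \<bar>f k e\<bar> \<le> B"
  shows "\<exists>\<phi> l. strict_mono \<phi> \<and> (\<forall>e\<in>F. (\<lambda>k. f (\<phi> k) e) \<longlonglongrightarrow> l e)"
  using assms
proof (induction F rule: finite_induct)
  case empty
  show ?case by (rule exI[of _ id]) (auto simp: strict_mono_def)
next
  case (insert e F)
  then obtain \<phi> l where \<phi>: "strict_mono \<phi>" "\<forall>e'\<in>F. (\<lambda>k. f (\<phi> k) e') \<longlonglongrightarrow> l e'" by auto
  obtain \<psi> where \<psi>: "strict_mono \<psi>" "monoseq (\<lambda>n. f (\<phi> (\<psi> n)) e)" using seq_monosub[of "\<lambda>n. f (\<phi> n) e"] by blast
  have "Bseq (\<lambda>n. f (\<phi> (\<psi> n)) e)" using insert.prems by (intro BseqI'[of _ B]) auto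
  then have "convergent (\<lambda>n. f (\<phi> (\<psi> n)) e)" using \<psi>(2) Bseq_monoseq_convergent by blast
  then obtain c where c: "(\<lambda>n. f (\<phi> (\<psi> n)) e) \<longlonglongrightarrow> c" by (auto simp: convergent_def)
  show ?case
  proof (intro exI[of _ "\<phi> \<circ> \<psi>"] exI[of _ "l(e := c)"] conjI ballI)
    show "strict_mono (\<phi> \<circ> \<psi>)" using \<phi>(1) \<psi>(1) by (rule strict_mono_o)
    fix e' assume "e' \<in> insert e F"
    show "(\<lambda>k. f ((\<phi> \<circ> \<psi>) k) e') \<longlonglongrightarrow> (l(e := c)) e'"
    proof (cases "e' = e")
      case True then show ?thesis using c by simp
    next
      case False
      with \<open>e' \<in> insert e F\<close> have "e' \<in> F" by simp
      then have "(\<lambda>k. f (\<phi> k) e') \<longlonglongrightarrow> l e'" using \<phi>(2) by blast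
      from LIMSEQ_subseq_LIMSEQ[OF this \<psi>(1)] show ?thesis using False by (simp add: o_def)
    qed
  qed
qed

lemma abs_le_sq_plus1: "\<bar>a::real\<bar> \<le> a^2 + 1"
proof (cases "\<bar>a\<bar> \<le> 1")
  case True then show ?thesis by (smt (verit) zero_le_power2)
next
  case False
  then have "\<bar>a\<bar> * 1 \<le> \<bar>a\<bar> * \<bar>a\<bar>" by (intro mult_left_mono) auto
  then show ?thesis by (simp add: power2_eq_square abs_mult_self_eq)
qed

lemma sep_delta:
  fixes D :: "('a \<Rightarrow> real) set" and E :: "'a set"
  assumes fin: "finite E"
    and conv: "\<And>y1 y2 l. y1 \<in> D \<Longrightarrow> y2 \<in> D \<Longrightarrow> 0 \<le> l \<Longrightarrow> l \<le> 1 \<Longrightarrow> (\<lambda>e. l * y1 e + (1 - l) * y2 e) \<in> D"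
    and up: "\<And>y y'. y \<in> D \<Longrightarrow> (\<forall>e\<in>E. y e \<le> y' e) \<Longrightarrow> y' \<in> D"
    and clo: "\<And>Y y. (\<forall>k. Y k \<in> D) \<Longrightarrow> (\<forall>e\<in>E. (\<lambda>k. Y k e) \<longlonglongrightarrow> y e) \<Longrightarrow> y \<in> D"
    and big: "\<And>y. y \<in> D \<Longrightarrow> \<exists>e\<in>E. w \<le> y e"
    and ne: "D \<noteq> {}"
    and dpos: "\<delta> > 0"
  shows "\<exists>x. (\<forall>e\<in>E. 0 \<le> x e) \<and> sum x E = 1 \<and> (\<forall>y\<in>D. w - \<delta> \<le> (\<Sum>e\<in>E. x e * y e))"
proof -
  define z where "z = w - \<delta>"
  define \<phi> where "\<phi> y = (\<Sum>e\<in>E. (y e - z)^2)" for y :: "'a \<Rightarrow> real"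
  define d where "d = Inf (\<phi> ` D)"
  have \<phi>0: "0 \<le> \<phi> y" for y unfolding \<phi>_def by (intro sum_nonneg) auto
  have bdd: "bdd_below (\<phi> ` D)" by (rule bdd_belowI[of _ 0]) (auto simp: \<phi>0)
  have dle: "d \<le> \<phi> y" if "y \<in> D" for y unfolding d_def using bdd that by (simp add: cInf_lower)
  have d0: "0 \<le> d" unfolding d_def using ne \<phi>0 by (intro cInf_greatest) auto
  have "\<forall>k. \<exists>y\<in>D. \<phi> y < d + inverse (real (Suc k))"
  proof
    fix k
    have "Inf (\<phi> ` D) < d + inverse (real (Suc k))" unfolding d_def by simp
    then obtain q where "q \<in> \<phi> ` D" "q < d + inverse (real (Suc k))"
      using cInf_lessD[of "\<phi> ` D"] ne by blast
    then show "\<exists>y\<in>D. \<phi> y < d + inverse (real (Suc k))" by blast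
  qed
  then obtain Y where Y: "\<And>k. Y k \<in> D" "\<And>k. \<phi> (Y k) < d + inverse (real (Suc k))" by metis
  have Ybd: "\<forall>k. \<forall>e\<in>E. \<bar>Y k e\<bar> \<le> \<bar>z\<bar> + d + 2"
  proof (intro allI ballI)
    fix k e assume e: "e \<in> E"
    have "(Y k e - z)^2 \<le> \<phi> (Y k)" unfolding \<phi>_def using fin e
      by (intro member_le_sum) auto
    moreover have "inverse (real (Suc k)) \<le> 1" by (simp add: inverse_le_1_iff)
    moreover note abs_le_sq_plus1[of "Y k e - z"] Y(2)[of k]
    ultimately show "\<bar>Y k e\<bar> \<le> \<bar>z\<bar> + d + 2" by linarith
  qed
  obtain \<psi> ys where \<psi>: "strict_mono \<psi>" "\<forall>e\<in>E. (\<lambda>k. Y (\<psi> k) e) \<longlonglongrightarrow> ys e"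
    using bw_finite[OF fin Ybd] by blast
  have ysD: "ys \<in> D" by (rule clo[of "\<lambda>k. Y (\<psi> k)"]) (use Y(1) \<psi>(2) in auto)
  have lim1: "(\<lambda>k. \<phi> (Y (\<psi> k))) \<longlonglongrightarrow> \<phi> ys" unfolding \<phi>_def
    by (intro tendsto_sum tendsto_intros) (use \<psi>(2) in auto)
  have "(\<lambda>k. d + inverse (real (Suc k))) \<longlonglongrightarrow> d + 0"
    by (intro tendsto_intros LIMSEQ_inverse_real_of_nat)
  then have lim2: "(\<lambda>k. d + inverse (real (Suc (\<psi> k)))) \<longlonglongrightarrow> d"
    using LIMSEQ_subseq_LIMSEQ[OF _ \<psi>(1)] by (simp add: o_def)
  have "\<phi> ys \<le> d"
    by (rule LIMSEQ_le[OF lim1 lim2]) (use Y(2) less_imp_le in blast)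
  then have ysmin: "\<phi> ys \<le> \<phi> y" if "y \<in> D" for y using dle[OF that] by linarith
  define a where "a e = ys e - z" for e
  have var: "0 \<le> (\<Sum>e\<in>E. a e * (y e - ys e))" if yD: "y \<in> D" for y
  proof (rule ccontr)
    define u where "u e = y e - ys e" for e
    define A where "A = (\<Sum>e\<in>E. a e * u e)"
    define B where "B = (\<Sum>e\<in>E. (u e)^2)"
    assume "\<not> 0 \<le> (\<Sum>e\<in>E. a e * (y e - ys e))"
    then have An: "A < 0" unfolding A_def u_def by simp
    have B0: "0 \<le> B" unfolding B_def by (intro sum_nonneg) auto
    have key: "\<phi> ys \<le> \<phi> ys + 2 * t * A + t^2 * B" if t: "0 \<le> t" "t \<le> 1" for t
    proof -
      have "(\<lambda>e. t * y e + (1 - t) * ys e) \<in> D" using conv[OF yD ysD t] .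
      then have "\<phi> ys \<le> \<phi> (\<lambda>e. t * y e + (1 - t) * ys e)" by (rule ysmin)
      also have "\<phi> (\<lambda>e. t * y e + (1 - t) * ys e) = (\<Sum>e\<in>E. (a e)^2 + 2 * t * (a e * u e) + t^2 * (u e)^2)"
        unfolding \<phi>_def a_def u_def by (intro sum.cong refl) (simp add: power2_eq_square algebra_simps)
      also have "\<dots> = \<phi> ys + 2 * t * A + t^2 * B"
        unfolding \<phi>_def A_def B_def a_def by (simp add: sum.distrib sum_distrib_left)
      finally show ?thesis .
    qed
    define t where "t = min 1 (- A / (B + 1))"
    have "- A / (B + 1) > 0" using An B0 by (intro divide_pos_pos) auto
    then have t0: "0 < t" unfolding t_def by simp
    have t1: "t \<le> 1" unfolding t_def by simp
    have "t * B \<le> (- A / (B + 1)) * B" using B0 unfolding t_def by (intro mult_right_mono) auto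
    also have "\<dots> = - A * (B / (B + 1))" by simp
    also have "\<dots> \<le> - A * 1" using An B0 by (intro mult_left_mono) auto
    finally have tB: "t * B \<le> - A" by simp
    from key[of t] t0 t1 have "0 \<le> t * (2 * A + t * B)" by (simp add: power2_eq_square algebra_simps)
    then have "0 \<le> 2 * A + t * B" using t0 by (simp add: zero_le_mult_iff)
    with tB An show False by linarith
  qed
  have a0: "0 \<le> a e" if e: "e \<in> E" for e
  proof -
    have "ys(e := ys e + 1) \<in> D" by (rule up[OF ysD]) auto
    from var[OF this] have "0 \<le> (\<Sum>e'\<in>E. a e' * (if e' = e then 1 else 0))"
      by (smt (verit, best) fun_upd_apply sum.cong)
    also have "\<dots> = a e" using fin e by (simp add: if_distrib sum.delta cong: if_cong)
    finally show ?thesis .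
  qed
  obtain e0 where e0: "e0 \<in> E" "w \<le> ys e0" using big[OF ysD] by blast
  define S where "S = sum a E"
  have "a e0 \<le> S" unfolding S_def using fin e0(1) a0 by (intro member_le_sum) auto
  moreover have "a e0 \<ge> \<delta>" using e0 unfolding a_def z_def by simp
  ultimately have S0: "S > 0" using dpos by linarith
  show ?thesis
  proof (intro exI[of _ "\<lambda>e. a e / S"] conjI ballI)
    show "0 \<le> a e / S" if "e \<in> E" for e using a0[OF that] S0 by simp
    show "(\<Sum>e\<in>E. a e / S) = 1" using S0 unfolding S_def by (simp add: sum_divide_distrib[symmetric])
    fix y assume yD: "y \<in> D"
    have "(\<Sum>e\<in>E. a e * ys e) = (\<Sum>e\<in>E. (a e)^2 + z * a e)"
      by (intro sum.cong) (auto simp: a_def power2_eq_square algebra_simps)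
    also have "\<dots> = (\<Sum>e\<in>E. (a e)^2) + z * S"
      by (simp add: sum.distrib sum_distrib_left S_def)
    finally have "(\<Sum>e\<in>E. a e * ys e) = (\<Sum>e\<in>E. (a e)^2) + z * S" .
    moreover have "0 \<le> (\<Sum>e\<in>E. (a e)^2)" by (intro sum_nonneg) auto
    moreover have "(\<Sum>e\<in>E. a e * ys e) \<le> (\<Sum>e\<in>E. a e * y e)"
      using var[OF yD] by (simp add: right_diff_distrib sum_subtractf)
    ultimately have "z * S \<le> (\<Sum>e\<in>E. a e * y e)" by linarith
    then have "z \<le> (\<Sum>e\<in>E. a e * y e) / S" using S0 by (simp add: pos_le_divide_eq)
    also have "\<dots> = (\<Sum>e\<in>E. a e / S * y e)" by (simp add: sum_divide_distrib)
    finally show "w - \<delta> \<le> (\<Sum>e\<in>E. a e / S * y e)" unfolding z_def .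
  qed
qed


lemma sep:
  fixes D :: "('a \<Rightarrow> real) set" and E :: "'a set"
  assumes fin: "finite E"
    and conv: "\<And>y1 y2 l. y1 \<in> D \<Longrightarrow> y2 \<in> D \<Longrightarrow> 0 \<le> l \<Longrightarrow> l \<le> 1 \<Longrightarrow> (\<lambda>e. l * y1 e + (1 - l) * y2 e) \<in> D"
    and up: "\<And>y y'. y \<in> D \<Longrightarrow> (\<forall>e\<in>E. y e \<le> y' e) \<Longrightarrow> y' \<in> D"
    and clo: "\<And>Y y. (\<forall>k. Y k \<in> D) \<Longrightarrow> (\<forall>e\<in>E. (\<lambda>k. Y k e) \<longlonglongrightarrow> y e) \<Longrightarrow> y \<in> D"
    and big: "\<And>y. y \<in> D \<Longrightarrow> \<exists>e\<in>E. w \<le> y e"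
    and ne: "D \<noteq> {}"
  shows "\<exists>x. (\<forall>e\<in>E. 0 \<le> x e) \<and> sum x E = 1 \<and> (\<forall>y\<in>D. w \<le> (\<Sum>e\<in>E. x e * y e))"
proof -
  have "\<forall>k. \<exists>x. (\<forall>e\<in>E. 0 \<le> x e) \<and> sum x E = 1 \<and> (\<forall>y\<in>D. w - inverse (real (Suc k)) \<le> (\<Sum>e\<in>E. x e * y e))"
  proof
    fix k
    show "\<exists>x. (\<forall>e\<in>E. 0 \<le> x e) \<and> sum x E = 1 \<and> (\<forall>y\<in>D. w - inverse (real (Suc k)) \<le> (\<Sum>e\<in>E. x e * y e))"
      by (rule sep_delta[OF fin conv up clo big ne]) auto
  qed
  then obtain X where X: "\<And>k e. e \<in> E \<Longrightarrow> 0 \<le> X k e" "\<And>k. sum (X k) E = 1"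
      "\<And>k y. y \<in> D \<Longrightarrow> w - inverse (real (Suc k)) \<le> (\<Sum>e\<in>E. X k e * y e)" by metis
  have bd: "\<forall>k. \<forall>e\<in>E. \<bar>X k e\<bar> \<le> 1"
  proof (intro allI ballI)
    fix k e assume e: "e \<in> E"
    have "X k e \<le> sum (X k) E" using fin e X(1) by (intro member_le_sum) auto
    then show "\<bar>X k e\<bar> \<le> 1" using X(1)[OF e, of k] X(2)[of k] by simp
  qed
  obtain \<psi> x where \<psi>: "strict_mono \<psi>" "\<forall>e\<in>E. (\<lambda>k. X (\<psi> k) e) \<longlonglongrightarrow> x e"
    using bw_finite[OF fin bd] by blast
  show ?thesis
  proof (intro exI[of _ x] conjI ballI)
    fix e assume e: "e \<in> E"
    show "0 \<le> x e" by (rule LIMSEQ_le_const[OF \<psi>(2)[rule_format, OF e]]) (use X(1)[OF e] in auto)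
  next
    have "(\<lambda>k. sum (X (\<psi> k)) E) \<longlonglongrightarrow> sum x E" by (intro tendsto_sum) (use \<psi>(2) in auto)
    then show "sum x E = 1" using X(2) by (simp add: LIMSEQ_const_iff)
  next
    fix y assume yD: "y \<in> D"
    have l1: "(\<lambda>k. \<Sum>e\<in>E. X (\<psi> k) e * y e) \<longlonglongrightarrow> (\<Sum>e\<in>E. x e * y e)"
      by (intro tendsto_sum tendsto_intros) (use \<psi>(2) in auto)
    have "(\<lambda>k. w - inverse (real (Suc k))) \<longlonglongrightarrow> w - 0"
      by (intro tendsto_intros LIMSEQ_inverse_real_of_nat)
    then have l2: "(\<lambda>k. w - inverse (real (Suc (\<psi> k)))) \<longlonglongrightarrow> w"
      using LIMSEQ_subseq_LIMSEQ[OF _ \<psi>(1)] by (simp add: o_def)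
    show "w \<le> (\<Sum>e\<in>E. x e * y e)"
      by (rule LIMSEQ_le[OF l2 l1]) (use X(3)[OF yD] in blast)
  qed
qed

lemma minimax_abstract:
  fixes g :: "'e \<Rightarrow> 's \<Rightarrow> ennreal" and S :: "'s set" and E :: "'e set"
  assumes fin: "finite E" and Ene: "E \<noteq> {}" and Sne: "S \<noteq> {}"
    and mix: "\<And>s1 s2 l. s1 \<in> S \<Longrightarrow> s2 \<in> S \<Longrightarrow> 0 \<le> l \<Longrightarrow> l \<le> 1 \<Longrightarrow>
                \<exists>s\<in>S. \<forall>e\<in>E. g e s = ennreal l * g e s1 + ennreal (1 - l) * g e s2"
    and clos: "\<And>ss. (\<forall>n. ss n \<in> S) \<Longrightarrow>
                \<exists>s\<in>S. \<forall>e\<in>E. \<forall>b B. (\<forall>n. g e (ss n) \<le> b n) \<longrightarrow> b \<longlonglongrightarrow> B \<longrightarrow> g e s \<le> B"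
    and approx: "\<And>s \<epsilon>. s \<in> S \<Longrightarrow> \<epsilon> > 0 \<Longrightarrow>
                \<exists>s'\<in>S. (\<forall>e\<in>E. g e s' < \<top>) \<and> (\<forall>e\<in>E. g e s < \<top> \<longrightarrow> g e s' \<le> g e s + ennreal \<epsilon>)"
  shows "\<exists>x s0. (\<forall>e\<in>E. 0 \<le> x e) \<and> sum x E = 1 \<and> s0 \<in> S \<and>
            (\<forall>s\<in>S. \<forall>e\<in>E. g e s0 \<le> (\<Sum>e'\<in>E. ennreal (x e') * g e' s))"
proof -
  define m where "m s = Max ((\<lambda>e. g e s) ` E)" for s
  have gm: "g e s \<le> m s" if "e \<in> E" for e s unfolding m_def using fin that by (intro Max_ge) auto
  have min: "m s \<in> (\<lambda>e. g e s) ` E" for s unfolding m_def using fin Ene by (intro Max_in) auto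
  define v where "v = Inf (m ` S)"
  obtain u where u: "\<And>n. u n \<in> m ` S" "u \<longlonglongrightarrow> v"
    using Inf_as_limit[of "m ` S"] Sne unfolding v_def by auto
  have "\<forall>n. \<exists>s\<in>S. u n = m s" using u(1) by blast
  then obtain ss where ss: "\<And>n. ss n \<in> S" "\<And>n. u n = m (ss n)" by metis
  obtain s0 where s0: "s0 \<in> S" "\<forall>e\<in>E. \<forall>b B. (\<forall>n. g e (ss n) \<le> b n) \<longrightarrow> b \<longlonglongrightarrow> B \<longrightarrow> g e s0 \<le> B"
    using clos[of ss] ss(1) by blast
  have s0v: "g e s0 \<le> v" if e: "e \<in> E" for e
    using s0(2)[rule_format, OF e, of u v] u(2) gm[OF e] ss(2) by simp
  obtain s1 where s1: "s1 \<in> S" using Sne by blast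
  obtain sf where sf: "sf \<in> S" "\<forall>e\<in>E. g e sf < \<top>" using approx[OF s1, of 1] by auto
  have vle: "v \<le> m s" if "s \<in> S" for s unfolding v_def using that by (intro Inf_lower) auto
  have "m sf < \<top>" using min[of sf] sf(2) by auto
  then have vfin: "v < \<top>" using vle[OF sf(1)] by simp
  define w where "w = enn2real v"
  have vw: "v = ennreal w" unfolding w_def using vfin by simp
  have w0: "0 \<le> w" unfolding w_def by simp
  define D where "D = {y. (\<forall>e\<in>E. 0 \<le> y e) \<and> (\<exists>s\<in>S. \<forall>e\<in>E. g e s \<le> ennreal (y e))}"
  have conv: "(\<lambda>e. l * y1 e + (1 - l) * y2 e) \<in> D"
    if y1: "y1 \<in> D" and y2: "y2 \<in> D" and l: "0 \<le> l" "l \<le> 1" for y1 y2 l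
  proof -
    obtain t1 where t1: "t1 \<in> S" "\<forall>e\<in>E. g e t1 \<le> ennreal (y1 e)" and p1: "\<forall>e\<in>E. 0 \<le> y1 e"
      using y1 unfolding D_def by blast
    obtain t2 where t2: "t2 \<in> S" "\<forall>e\<in>E. g e t2 \<le> ennreal (y2 e)" and p2: "\<forall>e\<in>E. 0 \<le> y2 e"
      using y2 unfolding D_def by blast
    obtain t where t: "t \<in> S" "\<forall>e\<in>E. g e t = ennreal l * g e t1 + ennreal (1 - l) * g e t2"
      using mix[OF t1(1) t2(1) l] by blast
    have "g e t \<le> ennreal (l * y1 e + (1 - l) * y2 e)" if e: "e \<in> E" for e
    proof -
      have "g e t \<le> ennreal l * ennreal (y1 e) + ennreal (1 - l) * ennreal (y2 e)"
        unfolding t(2)[rule_format, OF e]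
        by (intro add_mono mult_left_mono) (use t1 t2 e in auto)
      also have "\<dots> = ennreal (l * y1 e + (1 - l) * y2 e)"
        using l p1 p2 e by (simp add: ennreal_mult ennreal_plus)
      finally show ?thesis .
    qed
    moreover have "\<forall>e\<in>E. 0 \<le> l * y1 e + (1 - l) * y2 e" using l p1 p2 by simp
    ultimately show ?thesis unfolding D_def using t(1) by blast
  qed
  have up: "y' \<in> D" if yD: "y \<in> D" and yy: "\<forall>e\<in>E. y e \<le> y' e" for y y'
  proof -
    obtain t where t: "t \<in> S" "\<forall>e\<in>E. g e t \<le> ennreal (y e)" "\<forall>e\<in>E. 0 \<le> y e"
      using yD unfolding D_def by blast
    have "g e t \<le> ennreal (y' e)" if "e \<in> E" for e
      using t(2) that yy order_trans ennreal_leI by blast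
    moreover have "0 \<le> y' e" if "e \<in> E" for e
      using t(3) that yy order_trans by blast
    ultimately show ?thesis unfolding D_def using t(1) by blast
  qed
  have clo: "y \<in> D" if Y: "\<forall>k. Y k \<in> D" and lim: "\<forall>e\<in>E. (\<lambda>k. Y k e) \<longlonglongrightarrow> y e" for Y y
  proof -
    have "\<forall>k. \<exists>s\<in>S. \<forall>e\<in>E. g e s \<le> ennreal (Y k e)" using Y unfolding D_def by blast
    then obtain tt where tt: "\<And>k. tt k \<in> S" "\<And>k e. e \<in> E \<Longrightarrow> g e (tt k) \<le> ennreal (Y k e)" by metis
    obtain t where t: "t \<in> S" "\<forall>e\<in>E. \<forall>b B. (\<forall>n. g e (tt n) \<le> b n) \<longrightarrow> b \<longlonglongrightarrow> B \<longrightarrow> g e t \<le> B"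
      using clos[of tt] tt(1) by blast
    have pos: "0 \<le> y e" if e: "e \<in> E" for e
      by (rule LIMSEQ_le_const[OF lim[rule_format, OF e]]) (use Y e in \<open>auto simp: D_def\<close>)
    have "g e t \<le> ennreal (y e)" if e: "e \<in> E" for e
    proof -
      have "\<forall>n. g e (tt n) \<le> ennreal (Y n e)" using tt(2)[OF e] by blast
      moreover have "(\<lambda>n. ennreal (Y n e)) \<longlonglongrightarrow> ennreal (y e)"
        by (rule tendsto_ennrealI) (use lim e in auto)
      ultimately show ?thesis using t(2)[rule_format, OF e, of "\<lambda>n. ennreal (Y n e)" "ennreal (y e)"] by simp
    qed
    then show ?thesis unfolding D_def using pos t(1) by blast
  qed
  have big: "\<exists>e\<in>E. w \<le> y e" if yD: "y \<in> D" for y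
  proof (rule ccontr)
    assume "\<not> (\<exists>e\<in>E. w \<le> y e)"
    then have lt: "\<forall>e\<in>E. y e < w" by auto
    obtain t where t: "t \<in> S" "\<forall>e\<in>E. g e t \<le> ennreal (y e)" "\<forall>e\<in>E. 0 \<le> y e"
      using yD unfolding D_def by blast
    obtain e where e: "e \<in> E" "m t = g e t" using min[of t] by auto
    have "m t \<le> ennreal (y e)" using e t(2) by simp
    also have "\<dots> < ennreal w"
    proof -
      have "y e < w" using lt e by blast
      moreover have "0 \<le> y e" using t(3) e by blast
      ultimately show ?thesis by (intro ennreal_lessI) auto
    qed
    finally have "m t < v" using vw by simp
    with vle[OF t(1)] show False by simp
  qed
  have ne: "D \<noteq> {}"
  proof -
    have "(\<lambda>e. enn2real (g e sf)) \<in> D" unfolding D_def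
    proof (intro CollectI conjI ballI bexI[of _ sf])
      fix e assume "e \<in> E"
      then show "g e sf \<le> ennreal (enn2real (g e sf))" using sf(2) by simp
    qed (use sf(1) in simp_all)
    then show ?thesis by blast
  qed
  obtain x where x: "\<forall>e\<in>E. 0 \<le> x e" "sum x E = 1" "\<forall>y\<in>D. w \<le> (\<Sum>e\<in>E. x e * y e)"
  proof -
    have "\<exists>x. (\<forall>e\<in>E. 0 \<le> x e) \<and> sum x E = 1 \<and> (\<forall>y\<in>D. w \<le> (\<Sum>e\<in>E. x e * y e))"
    proof (rule sep[OF fin])
      fix y1 y2 and l :: real assume "y1 \<in> D" "y2 \<in> D" "0 \<le> l" "l \<le> 1"
      then show "(\<lambda>e. l * y1 e + (1 - l) * y2 e) \<in> D" by (rule conv)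
    next
      fix y y' assume "y \<in> D" "\<forall>e\<in>E. y e \<le> y' e"
      then show "y' \<in> D" by (rule up)
    next
      fix Y y assume "\<forall>k. Y k \<in> D" "\<forall>e\<in>E. (\<lambda>k. Y k e) \<longlonglongrightarrow> y e"
      then show "y \<in> D" by (rule clo)
    next
      fix y assume "y \<in> D"
      then show "\<exists>e\<in>E. w \<le> y e" by (rule big)
    next
      show "D \<noteq> {}" by (rule ne)
    qed
    then show ?thesis using that by blast
  qed
  have sumx: "(\<Sum>e\<in>E. ennreal (x e)) = 1" using x(1,2) by simp
  show ?thesis
  proof (intro exI[of _ x] exI[of _ s0] conjI ballI)
    fix s e assume s: "s \<in> S" and e: "e \<in> E"
    define T where "T = (\<Sum>e'\<in>E. ennreal (x e') * g e' s)"
    have "ennreal w \<le> T"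
    proof (cases "T = \<top>")
      case True then show ?thesis by simp
    next
      case False
      have finpos: "g e' s < \<top>" if e': "e' \<in> E" "0 < x e'" for e'
      proof (rule ccontr)
        assume "\<not> g e' s < \<top>"
        then have "g e' s = \<top>" using less_top by blast
        then have "ennreal (x e') * g e' s = \<top>" using e' by (simp add: ennreal_mult_top)
        moreover have "ennreal (x e') * g e' s \<le> T" unfolding T_def using fin e'(1)
          by (intro member_le_sum) auto
        ultimately show False using False by (simp add: top_unique)
      qed
      show ?thesis
      proof (rule ennreal_le_epsilon)
        fix \<epsilon> :: real assume \<epsilon>: "0 < \<epsilon>"
        obtain s' where s': "s' \<in> S" "\<forall>e\<in>E. g e s' < \<top>" "\<forall>e\<in>E. g e s < \<top> \<longrightarrow> g e s' \<le> g e s + ennreal \<epsilon>"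
          using approx[OF s \<epsilon>] by blast
        define y' where "y' e = enn2real (g e s')" for e
        have y'D: "y' \<in> D" unfolding D_def y'_def using s' by auto
        have "ennreal w \<le> ennreal (\<Sum>e\<in>E. x e * y' e)" using x(3) y'D by (simp add: ennreal_leI)
        also have "\<dots> = (\<Sum>e\<in>E. ennreal (x e * y' e))"
          using x(1) by (simp add: y'_def)
        also have "\<dots> = (\<Sum>e\<in>E. ennreal (x e) * g e s')"
          using x(1) s'(2) by (intro sum.cong) (auto simp: ennreal_mult y'_def less_top)
        also have "\<dots> \<le> (\<Sum>e\<in>E. ennreal (x e) * g e s + ennreal \<epsilon> * ennreal (x e))"
        proof (intro sum_mono)
          fix e' assume e': "e' \<in> E"
          show "ennreal (x e') * g e' s' \<le> ennreal (x e') * g e' s + ennreal \<epsilon> * ennreal (x e')"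
          proof (cases "x e' = 0")
            case True then show ?thesis by simp
          next
            case False
            then have "0 < x e'" using x(1) e' by (simp add: less_le)
            then have "g e' s' \<le> g e' s + ennreal \<epsilon>" using s'(3) finpos e' by blast
            then have "ennreal (x e') * g e' s' \<le> ennreal (x e') * (g e' s + ennreal \<epsilon>)"
              by (intro mult_left_mono) auto
            then show ?thesis by (simp add: distrib_left mult.commute)
          qed
        qed
        also have "\<dots> = T + ennreal \<epsilon> * (\<Sum>e\<in>E. ennreal (x e))"
          unfolding T_def by (simp add: sum.distrib sum_distrib_left)
        also have "\<dots> = T + ennreal \<epsilon>" using sumx by simp
        finally show "ennreal w \<le> T + ennreal \<epsilon>" .
      qed
    qed
    then show "g e s0 \<le> T" using s0v[OF e] vw by simp
  qed (use x s0 in auto)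
qed

definition mixp :: "real \<Rightarrow> 'a pmf \<Rightarrow> 'a pmf \<Rightarrow> 'a pmf" where
  "mixp a P Q = bind_pmf (bernoulli_pmf a) (\<lambda>b. if b then P else Q)"

lemma pmf_mixp: "0 \<le> a \<Longrightarrow> a \<le> 1 \<Longrightarrow> pmf (mixp a P Q) x = a * pmf P x + (1 - a) * pmf Q x"
  unfolding mixp_def by (simp add: pmf_bind)

lemma set_mixp: "set_pmf (mixp a P Q) \<subseteq> set_pmf P \<union> set_pmf Q"
  unfolding mixp_def by (auto split: if_splits)

lemma prob_mixp: "0 \<le> a \<Longrightarrow> a \<le> 1 \<Longrightarrow>
  measure_pmf.prob (mixp a P Q) S = a * measure_pmf.prob P S + (1 - a) * measure_pmf.prob Q S"
proof -
  assume a: "0 \<le> a" "a \<le> 1"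
  have "ennreal (measure_pmf.prob (mixp a P Q) S) =
      ennreal (a * measure_pmf.prob P S + (1 - a) * measure_pmf.prob Q S)"
    using a by (simp add: mixp_def measure_pmf.emeasure_eq_measure[symmetric] nn_integral_bernoulli_pmf
        ennreal_mult ennreal_plus mult.commute)
  moreover have "0 \<le> a * measure_pmf.prob P S + (1 - a) * measure_pmf.prob Q S" using a by simp
  ultimately show ?thesis using ennreal_inj[OF measure_nonneg] by blast
qed

lemma integral_pmf_point:
  "(\<integral>x. (if x = a then c else 0) \<partial>measure_pmf M) = pmf M a * (c::real)"
proof -
  have "(\<lambda>x. if x = a then c else 0) = (\<lambda>x. indicator {a} x * c)" by (auto simp: indicator_def)
  then show ?thesis by (simp add: measure_pmf_single)
qed

lemma pmf_hist_Suc: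
  "pmf (hist_pmf E p \<sigma> (Suc t)) (h @ [(A, v)]) =
     pmf (hist_pmf E p \<sigma> t) h * pmf (active_pmf E p) A * pmf (\<sigma> h A) v"
proof -
  have inner: "pmf (map_pmf (\<lambda>v'. h' @ [(A', v')]) (\<sigma> h' A')) (h @ [(A, v)]) =
      (if h' = h then (if A' = A then pmf (\<sigma> h A) v else 0) else 0)" for h' A'
  proof (cases "h' = h \<and> A' = A")
    case True
    have "inj (\<lambda>v'. h @ [(A, v')])" by (auto simp: inj_def)
    from pmf_map_inj'[OF this, of "\<sigma> h A" v] show ?thesis using True by simp
  next
    case False
    then show ?thesis by (auto intro!: pmf_map_outside)
  qed
  have inner2: "pmf (bind_pmf (active_pmf E p) (\<lambda>A'. map_pmf (\<lambda>v'. h' @ [(A', v')]) (\<sigma> h' A'))) (h @ [(A, v)])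
      = (if h' = h then pmf (active_pmf E p) A * pmf (\<sigma> h A) v else 0)" for h'
    by (cases "h' = h") (simp_all add: pmf_bind inner integral_pmf_point)
  have "pmf (hist_pmf E p \<sigma> (Suc t)) (h @ [(A, v)]) = (\<integral>h'. pmf (bind_pmf (active_pmf E p)
      (\<lambda>A'. map_pmf (\<lambda>v'. h' @ [(A', v')]) (\<sigma> h' A'))) (h @ [(A, v)]) \<partial>measure_pmf (hist_pmf E p \<sigma> t))"
    unfolding hist_pmf.simps by (subst pmf_bind) (rule refl)
  also have "\<dots> = (\<integral>h'. (if h' = h then pmf (active_pmf E p) A * pmf (\<sigma> h A) v else 0) \<partial>measure_pmf (hist_pmf E p \<sigma> t))"
    by (simp only: inner2)
  also have "\<dots> = pmf (hist_pmf E p \<sigma> t) h * pmf (active_pmf E p) A * pmf (\<sigma> h A) v"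
    by (simp only: integral_pmf_point mult.assoc)
  finally show ?thesis .
qed

lemma pmf_hist_Suc_Nil: "pmf (hist_pmf E p \<sigma> (Suc t)) [] = 0"
  by (auto simp: pmf_eq_0_set_pmf)

lemma pmf_hist_0: "pmf (hist_pmf E p \<sigma> 0) h = (if h = [] then 1 else 0)"
  by (simp add: pmf_return)

lemma set_hist_length: "h \<in> set_pmf (hist_pmf E p \<sigma> t) \<Longrightarrow> length h = t"
  by (induction t arbitrary: h) auto

lemma pmf_hist_length: "length h \<noteq> t \<Longrightarrow> pmf (hist_pmf E p \<sigma> t) h = 0"
  using set_hist_length by (metis pmf_eq_0_set_pmf)

lemma cur_pos_snoc[simp]: "cur_pos r (h @ [(A, v)]) = v"
  by (simp add: cur_pos_def)

lemma set_active: "set_pmf (active_pmf E p) \<subseteq> Pow E"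
  unfolding active_pmf_def by auto

lemma graph_edge_V:
  assumes "graph_ok V E r" "{u, w} \<in> E" shows "u \<in> V" "w \<in> V" "u \<noteq> w"
proof -
  from assms obtain a b where "{u, w} = {a, b}" "a \<in> V" "b \<in> V" "a \<noteq> b"
    unfolding graph_ok_def by blast
  then show "u \<in> V" "w \<in> V" "u \<noteq> w" by (auto simp: doubleton_eq_iff)
qed

definition Hs :: "'v set set \<Rightarrow> 'v set \<Rightarrow> nat \<Rightarrow> 'v hist set" where
  "Hs E V t = {h. set h \<subseteq> Pow E \<times> V \<and> length h = t}"

lemma finite_Hs: "finite E \<Longrightarrow> finite V \<Longrightarrow> finite (Hs E V t)"
  unfolding Hs_def by (intro finite_lists_length_eq) auto

lemma cur_pos_in_V: "r \<in> V \<Longrightarrow> set h \<subseteq> Pow E \<times> V \<Longrightarrow> cur_pos r h \<in> V"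
  unfolding cur_pos_def by (cases h rule: rev_cases) auto

lemma strat_step_V:
  assumes "graph_ok V E r" "searcher_strategy E r \<sigma>" "set h \<subseteq> Pow E \<times> V" "A \<subseteq> E"
    "v \<in> set_pmf (\<sigma> h A)"
  shows "v \<in> V"
proof -
  have rV: "r \<in> V" using assms(1) unfolding graph_ok_def by blast
  have "v \<in> insert (cur_pos r h) {w. {cur_pos r h, w} \<in> A}"
    using assms(2,4,5) unfolding searcher_strategy_def by blast
  then show ?thesis using cur_pos_in_V[OF rV assms(3)] graph_edge_V[OF assms(1)] assms(4) by blast
qed

lemma set_hist_Hs:
  assumes "graph_ok V E r" "searcher_strategy E r \<sigma>"
  shows "set_pmf (hist_pmf E p \<sigma> t) \<subseteq> Hs E V t"
proof (induction t)
  case 0 then show ?case by (simp add: Hs_def)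
next
  case (Suc t)
  show ?case
  proof
    fix h assume "h \<in> set_pmf (hist_pmf E p \<sigma> (Suc t))"
    then obtain h' A v where h: "h' \<in> set_pmf (hist_pmf E p \<sigma> t)" "A \<in> set_pmf (active_pmf E p)"
      "v \<in> set_pmf (\<sigma> h' A)" "h = h' @ [(A, v)]" by auto
    have h'H: "set h' \<subseteq> Pow E \<times> V" "length h' = t" using Suc h(1) by (auto simp: Hs_def)
    have AE: "A \<subseteq> E" using set_active h(2) by blast
    have "v \<in> V" using strat_step_V[OF assms h'H(1) AE h(3)] .
    then show "h \<in> Hs E V (Suc t)" using h'H AE h(4) by (auto simp: Hs_def)
  qed
qed

lemma pmf_hist_outside:
  assumes "graph_ok V E r" "searcher_strategy E r \<sigma>" "h \<notin> Hs E V t"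
  shows "pmf (hist_pmf E p \<sigma> t) h = 0"
  using set_hist_Hs[OF assms(1,2)] assms(3) by (meson pmf_eq_0_set_pmf subsetD)

declare hist_pmf.simps(2)[simp del]

definition kmix :: "'v set set \<Rightarrow> ('v set \<Rightarrow> real) \<Rightarrow> 'v strat \<Rightarrow> 'v strat \<Rightarrow> real \<Rightarrow> 'v strat" where
  "kmix E p \<sigma>1 \<sigma>2 l h A = (let P1 = pmf (hist_pmf E p \<sigma>1 (length h)) h; P2 = pmf (hist_pmf E p \<sigma>2 (length h)) h;
      D = l * P1 + (1 - l) * P2 in mixp (if D = 0 then 1 else l * P1 / D) (\<sigma>1 h A) (\<sigma>2 h A))"

lemma kmix_pmf:
  assumes l: "0 \<le> l" "l \<le> 1"
  shows "pmf (hist_pmf E p (kmix E p \<sigma>1 \<sigma>2 l) t) h =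
           l * pmf (hist_pmf E p \<sigma>1 t) h + (1 - l) * pmf (hist_pmf E p \<sigma>2 t) h"
proof (induction t arbitrary: h)
  case 0 show ?case by (simp add: pmf_hist_0 algebra_simps)
next
  case (Suc t)
  show ?case
  proof (cases h rule: rev_cases)
    case Nil then show ?thesis by (simp add: pmf_hist_Suc_Nil)
  next
    case (snoc h' x)
    obtain A v where x: "x = (A, v)" by (cases x)
    show ?thesis
    proof (cases "length h' = t")
      case False
      then show ?thesis using snoc x by (simp add: pmf_hist_Suc pmf_hist_length)
    next
      case True
      define P1 where "P1 = pmf (hist_pmf E p \<sigma>1 t) h'"
      define P2 where "P2 = pmf (hist_pmf E p \<sigma>2 t) h'"
      define D where "D = l * P1 + (1 - l) * P2"
      define \<alpha> where "\<alpha> = (if D = 0 then 1 else l * P1 / D)"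
      define a where "a = pmf (active_pmf E p) A"
      define s1 where "s1 = pmf (\<sigma>1 h' A) v"
      define s2 where "s2 = pmf (\<sigma>2 h' A) v"
      have P0: "0 \<le> P1" "0 \<le> P2" by (simp_all add: P1_def P2_def)
      have lP1: "0 \<le> l * P1" "0 \<le> (1 - l) * P2" using P0 l by simp_all
      have kh: "kmix E p \<sigma>1 \<sigma>2 l h' A = mixp \<alpha> (\<sigma>1 h' A) (\<sigma>2 h' A)"
        unfolding kmix_def \<alpha>_def D_def P1_def P2_def using True by (simp add: Let_def)
      have \<alpha>01: "0 \<le> \<alpha>" "\<alpha> \<le> 1"
      proof -
        have "0 \<le> \<alpha> \<and> \<alpha> \<le> 1"
        proof (cases "D = 0")
          case True then show ?thesis by (simp add: \<alpha>_def)
        next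
          case False
          then have "D > 0" using lP1 unfolding D_def by simp
          then show ?thesis using lP1 False unfolding \<alpha>_def by (simp add: D_def divide_le_eq_1)
        qed
        then show "0 \<le> \<alpha>" "\<alpha> \<le> 1" by simp_all
      qed
      have "pmf (hist_pmf E p (kmix E p \<sigma>1 \<sigma>2 l) (Suc t)) h = D * a * (\<alpha> * s1 + (1 - \<alpha>) * s2)"
        using snoc x Suc.IH[of h']
        by (simp add: pmf_hist_Suc kh pmf_mixp[OF \<alpha>01] D_def P1_def P2_def a_def s1_def s2_def)
      also have "\<dots> = l * (P1 * a * s1) + (1 - l) * (P2 * a * s2)"
      proof (cases "D = 0")
        case True
        then have "l * P1 = 0" "(1 - l) * P2 = 0" using lP1 unfolding D_def by linarith+
        moreover have "l * (P1 * a * s1) + (1 - l) * (P2 * a * s2) = (l * P1) * (a * s1) + ((1 - l) * P2) * (a * s2)"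
          by (simp only: mult_ac)
        ultimately show ?thesis using True by (simp only: mult_zero_left mult_zero_right add_0)
      next
        case False
        then have "D * \<alpha> = l * P1" unfolding \<alpha>_def by simp
        moreover have "D * (1 - \<alpha>) = (1 - l) * P2" using \<open>D * \<alpha> = l * P1\<close>
          by (simp add: right_diff_distrib D_def)
        moreover have "D * a * (\<alpha> * s1 + (1 - \<alpha>) * s2) = (D * \<alpha>) * (a * s1) + (D * (1 - \<alpha>)) * (a * s2)"
          by algebra
        ultimately show ?thesis by (simp add: mult_ac)
      qed
      also have "\<dots> = l * pmf (hist_pmf E p \<sigma>1 (Suc t)) h + (1 - l) * pmf (hist_pmf E p \<sigma>2 (Suc t)) h"
        using snoc x by (simp add: pmf_hist_Suc P1_def P2_def a_def s1_def s2_def)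
      finally show ?thesis .
    qed
  qed
qed

lemma kmix_strategy:
  assumes "searcher_strategy E r \<sigma>1" "searcher_strategy E r \<sigma>2"
  shows "searcher_strategy E r (kmix E p \<sigma>1 \<sigma>2 l)"
  unfolding searcher_strategy_def
proof (intro allI impI)
  fix h A assume "A \<subseteq> E"
  then have s1: "set_pmf (\<sigma>1 h A) \<subseteq> insert (cur_pos r h) {w. {cur_pos r h, w} \<in> A}"
    and s2: "set_pmf (\<sigma>2 h A) \<subseteq> insert (cur_pos r h) {w. {cur_pos r h, w} \<in> A}"
    using assms unfolding searcher_strategy_def by blast+
  have "set_pmf (kmix E p \<sigma>1 \<sigma>2 l h A) \<subseteq> set_pmf (\<sigma>1 h A) \<union> set_pmf (\<sigma>2 h A)"
    unfolding kmix_def Let_def by (rule set_mixp)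
  then show "set_pmf (kmix E p \<sigma>1 \<sigma>2 l h A) \<subseteq> insert (cur_pos r h) {w. {cur_pos r h, w} \<in> A}"
    using s1 s2 by blast
qed

lemma kmix_hist:
  assumes "0 \<le> l" "l \<le> 1"
  shows "hist_pmf E p (kmix E p \<sigma>1 \<sigma>2 l) t = mixp l (hist_pmf E p \<sigma>1 t) (hist_pmf E p \<sigma>2 t)"
  by (rule pmf_eqI) (simp add: kmix_pmf[OF assms] pmf_mixp[OF assms])

lemma kmix_payoff:
  assumes "0 \<le> l" "l \<le> 1"
  shows "payoff E r p e (kmix E p \<sigma>1 \<sigma>2 l) =
           ennreal l * payoff E r p e \<sigma>1 + ennreal (1 - l) * payoff E r p e \<sigma>2"
proof -
  define a where "a t = measure_pmf.prob (hist_pmf E p \<sigma>1 t) {h. e \<notin> traversed r h}" for t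
  define b where "b t = measure_pmf.prob (hist_pmf E p \<sigma>2 t) {h. e \<notin> traversed r h}" for t
  have "payoff E r p e (kmix E p \<sigma>1 \<sigma>2 l) = (\<Sum>t. ennreal (l * a t + (1 - l) * b t))"
    unfolding payoff_def kmix_hist[OF assms] prob_mixp[OF assms] a_def b_def ..
  also have "\<dots> = (\<Sum>t. ennreal l * ennreal (a t) + ennreal (1 - l) * ennreal (b t))"
    using assms by (intro suminf_cong) (simp add: a_def b_def ennreal_plus ennreal_mult)
  also have "\<dots> = (\<Sum>t. ennreal l * ennreal (a t)) + (\<Sum>t. ennreal (1 - l) * ennreal (b t))"
    by (rule suminf_add[symmetric]) (auto intro: summableI)
  also have "\<dots> = ennreal l * payoff E r p e \<sigma>1 + ennreal (1 - l) * payoff E r p e \<sigma>2"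
    unfolding payoff_def a_def b_def by (simp add: ennreal_suminf_cmult)
  finally show ?thesis .
qed

lemma graph_finite:
  assumes "graph_ok V E r" shows "finite V" "finite E" "r \<in> V"
proof -
  show "finite V" "r \<in> V" using assms unfolding graph_ok_def by auto
  have "E \<subseteq> Pow V" using assms unfolding graph_ok_def by auto
  then show "finite E" using \<open>finite V\<close> by (rule finite_subset[OF _ finite_Pow_iff[THEN iffD2]])
qed

lemma pmf_sum_V:
  assumes g: "graph_ok V E r" and s: "searcher_strategy E r \<sigma>" and h: "set h \<subseteq> Pow E \<times> V" and A: "A \<subseteq> E"
  shows "(\<Sum>v\<in>V. pmf (\<sigma> h A) v) = 1"
  using strat_step_V[OF g s h A] graph_finite[OF g] by (intro sum_pmf_eq_1) auto

lemma compact_strat: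
  fixes ss :: "nat \<Rightarrow> 'v strat"
  assumes g: "graph_ok V E r" and ss: "\<And>n. searcher_strategy E r (ss n)"
  shows "\<exists>\<sigma> \<phi>. searcher_strategy E r \<sigma> \<and> strict_mono \<phi> \<and>
           (\<forall>t h. (\<lambda>k. pmf (hist_pmf E p (ss (\<phi> k)) t) h) \<longlonglongrightarrow> pmf (hist_pmf E p \<sigma> t) h)"
proof -
  note fin = graph_finite[OF g]
  define Q where "Q = lists (Pow E \<times> V) \<times> Pow E \<times> V"
  have cQ: "countable Q" unfolding Q_def using fin
    by (intro countable_SIGMA countable_lists countable_finite) auto
  define qn where "qn = from_nat_into Q"
  define f where "f n i = pmf (ss n (fst (qn i)) (fst (snd (qn i)))) (snd (snd (qn i)))" for n i
  define P where "P i s \<longleftrightarrow> convergent (\<lambda>k. f (s k) i)" for i and s :: "nat \<Rightarrow> nat"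
  interpret DS: subseqs P
  proof
    fix i and s :: "nat \<Rightarrow> nat" assume "strict_mono s"
    obtain r' where r': "strict_mono r'" "monoseq (\<lambda>n. f (s (r' n)) i)"
      using seq_monosub[of "\<lambda>n. f (s n) i"] by blast
    have "Bseq (\<lambda>n. f (s (r' n)) i)" unfolding f_def by (intro BseqI'[of _ 1]) (simp add: pmf_le_1)
    then have "convergent (\<lambda>n. f (s (r' n)) i)" using r'(2) Bseq_monoseq_convergent by blast
    then show "\<exists>r'. strict_mono r' \<and> P i (s \<circ> r')" using r'(1) unfolding P_def by (auto simp: o_def)
  qed
  define \<phi> where "\<phi> = DS.diagseq"
  have \<phi>mono: "strict_mono \<phi>" unfolding \<phi>_def by (rule DS.subseq_diagseq)
  have convi: "convergent (\<lambda>k. f (\<phi> k) i)" for i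
  proof -
    have "P i (DS.diagseq \<circ> ((+) (Suc i)))"
      by (rule DS.diagseq_holds) (auto simp: P_def o_def dest: convergent_subseq_convergent)
    then have "convergent (\<lambda>k. f (\<phi> (k + Suc i)) i)" unfolding P_def \<phi>_def by (simp add: o_def add.commute)
    then show ?thesis using convergent_ignore_initial_segment[of "\<lambda>k. f (\<phi> k) i" "Suc i"] by simp
  qed
  have convQ: "convergent (\<lambda>k. pmf (ss (\<phi> k) h A) v)" if hQ: "(h, A, v) \<in> Q" for h A v
  proof -
    obtain i where "qn i = (h, A, v)" using from_nat_into_surj[OF cQ hQ] unfolding qn_def by blast
    then show ?thesis using convi[of i] unfolding f_def by simp
  qed
  define L where "L h A v = lim (\<lambda>k. pmf (ss (\<phi> k) h A) v)" for h A v
  define rel where "rel h A \<longleftrightarrow> set h \<subseteq> Pow E \<times> V \<and> A \<subseteq> E" for h A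
  have limL: "(\<lambda>k. pmf (ss (\<phi> k) h A) v) \<longlonglongrightarrow> L h A v" if "rel h A" "v \<in> V" for h A v
  proof -
    have "(h, A, v) \<in> Q" using that unfolding Q_def rel_def by (auto simp: in_lists_conv_set)
    then show ?thesis using convQ[of h A v] unfolding L_def by (simp add: convergent_LIMSEQ_iff)
  qed
  have zero: "pmf (ss n h A) v = 0" if "rel h A" "v \<notin> V" for n h A v
    using strat_step_V[OF g ss, of h A v] that unfolding rel_def by (meson pmf_eq_0_set_pmf)
  have L0: "0 \<le> L h A v" if "rel h A" "v \<in> V" for h A v
    by (rule LIMSEQ_le_const[OF limL[OF that]]) simp
  have Lsum: "(\<Sum>v\<in>V. L h A v) = 1" if "rel h A" for h A
  proof -
    have "(\<lambda>k. \<Sum>v\<in>V. pmf (ss (\<phi> k) h A) v) \<longlonglongrightarrow> (\<Sum>v\<in>V. L h A v)"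
      by (intro tendsto_sum limL that)
    moreover have "(\<Sum>v\<in>V. pmf (ss (\<phi> k) h A) v) = 1" for k
      using pmf_sum_V[OF g ss] that unfolding rel_def by blast
    ultimately show ?thesis by (simp add: LIMSEQ_const_iff)
  qed
  define F where "F h A v = (if v \<in> V then L h A v else 0)" for h A v
  have F0: "0 \<le> F h A v" if "rel h A" for h A v using L0[OF that] unfolding F_def by simp
  have F1: "(\<integral>\<^sup>+v. ennreal (F h A v) \<partial>count_space UNIV) = 1" if "rel h A" for h A
  proof -
    have "(\<integral>\<^sup>+v. ennreal (F h A v) \<partial>count_space UNIV) = (\<Sum>v\<in>V. ennreal (F h A v))"
      using fin by (intro nn_integral_count_space') (auto simp: F_def)
    also have "\<dots> = ennreal (\<Sum>v\<in>V. F h A v)" using F0[OF that] by simp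
    also have "(\<Sum>v\<in>V. F h A v) = 1" using Lsum[OF that] unfolding F_def by simp
    finally show ?thesis by simp
  qed
  define \<sigma> where "\<sigma> h A = (if rel h A then embed_pmf (F h A) else return_pmf (cur_pos r h))" for h A
  have pmf\<sigma>: "pmf (\<sigma> h A) v = F h A v" if "rel h A" for h A v
    unfolding \<sigma>_def using that pmf_embed_pmf[OF F0[OF that] F1[OF that]] by simp
  have lim\<sigma>: "(\<lambda>k. pmf (ss (\<phi> k) h A) v) \<longlonglongrightarrow> pmf (\<sigma> h A) v" if "rel h A" for h A v
  proof (cases "v \<in> V")
    case True then show ?thesis using limL[OF that True] pmf\<sigma>[OF that] by (simp add: F_def)
  next
    case False then show ?thesis using zero[OF that False] pmf\<sigma>[OF that] by (simp add: F_def)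
  qed
  have strat: "searcher_strategy E r \<sigma>"
    unfolding searcher_strategy_def
  proof (intro allI impI subsetI)
    fix h A v assume A: "A \<subseteq> E" and v: "v \<in> set_pmf (\<sigma> h A)"
    show "v \<in> insert (cur_pos r h) {w. {cur_pos r h, w} \<in> A}"
    proof (cases "rel h A")
      case False then show ?thesis using v unfolding \<sigma>_def by simp
    next
      case True
      have "pmf (\<sigma> h A) v > 0" using v by (simp add: pmf_positive)
      then have "eventually (\<lambda>k. pmf (ss (\<phi> k) h A) v > 0) sequentially"
        using lim\<sigma>[OF True, of v] by (simp add: order_tendstoD(1))
      then obtain k where "pmf (ss (\<phi> k) h A) v > 0" by (auto dest: eventually_happens)
      then have "v \<in> set_pmf (ss (\<phi> k) h A)" by (simp add: set_pmf_eq')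
      then show ?thesis using ss[of "\<phi> k"] A unfolding searcher_strategy_def by blast
    qed
  qed
  have limH: "(\<lambda>k. pmf (hist_pmf E p (ss (\<phi> k)) t) h) \<longlonglongrightarrow> pmf (hist_pmf E p \<sigma> t) h" for t h
  proof (induction t arbitrary: h)
    case 0 show ?case by (simp add: pmf_hist_0)
  next
    case (Suc t)
    show ?case
    proof (cases h rule: rev_cases)
      case Nil then show ?thesis by (simp only: pmf_hist_Suc_Nil) simp
    next
      case (snoc h' x)
      obtain A v where x: "x = (A, v)" by (cases x)
      show ?thesis
      proof (cases "h \<in> Hs E V (Suc t)")
        case False
        then show ?thesis using pmf_hist_outside[OF g ss] pmf_hist_outside[OF g strat] by simp
      next
        case True
        then have rel: "rel h' A" using snoc x unfolding Hs_def rel_def by auto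
        show ?thesis unfolding snoc x pmf_hist_Suc
          by (intro tendsto_mult Suc.IH tendsto_const lim\<sigma>[OF rel])
      qed
    qed
  qed
  show ?thesis using strat \<phi>mono limH by blast
qed

lemma prob_hist_sum:
  assumes g: "graph_ok V E r" and s: "searcher_strategy E r \<sigma>"
  shows "measure_pmf.prob (hist_pmf E p \<sigma> t) S = (\<Sum>h\<in>Hs E V t \<inter> S. pmf (hist_pmf E p \<sigma> t) h)"
proof -
  let ?M = "hist_pmf E p \<sigma> t"
  have "measure_pmf.prob ?M S = measure_pmf.prob ?M (S \<inter> set_pmf ?M)" by (simp add: measure_Int_set_pmf)
  also have "S \<inter> set_pmf ?M = (Hs E V t \<inter> S) \<inter> set_pmf ?M" using set_hist_Hs[OF g s] by blast
  also have "measure_pmf.prob ?M \<dots> = measure_pmf.prob ?M (Hs E V t \<inter> S)" by (simp add: measure_Int_set_pmf)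
  also have "\<dots> = (\<Sum>h\<in>Hs E V t \<inter> S. pmf ?M h)"
    using finite_Hs graph_finite[OF g] by (intro measure_measure_pmf_finite) auto
  finally show ?thesis .
qed

lemma payoff_lsc:
  fixes ss :: "nat \<Rightarrow> 'v strat"
  assumes g: "graph_ok V E r" and ss: "\<And>n. searcher_strategy E r (ss n)" and s: "searcher_strategy E r \<sigma>"
    and lim: "\<forall>t h. (\<lambda>k. pmf (hist_pmf E p (ss k) t) h) \<longlonglongrightarrow> pmf (hist_pmf E p \<sigma> t) h"
    and b: "\<forall>n. payoff E r p e (ss n) \<le> b n" and bB: "b \<longlonglongrightarrow> B"
  shows "payoff E r p e \<sigma> \<le> B"
proof -
  define S where "S = {h. e \<notin> traversed r h}"
  define a where "a k t = measure_pmf.prob (hist_pmf E p (ss k) t) S" for k t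
  define a' where "a' t = measure_pmf.prob (hist_pmf E p \<sigma> t) S" for t
  have at: "(\<lambda>k. a k t) \<longlonglongrightarrow> a' t" for t
    unfolding a_def a'_def prob_hist_sum[OF g ss] prob_hist_sum[OF g s]
    by (intro tendsto_sum) (use lim in blast)
  have part: "(\<Sum>t<T. ennreal (a' t)) \<le> B" for T
  proof (rule LIMSEQ_le[OF _ bB])
    show "(\<lambda>k. \<Sum>t<T. ennreal (a k t)) \<longlonglongrightarrow> (\<Sum>t<T. ennreal (a' t))"
      by (intro tendsto_sum tendsto_ennrealI at)
    show "\<exists>N. \<forall>n\<ge>N. (\<Sum>t<T. ennreal (a n t)) \<le> b n"
    proof (intro exI allI impI)
      fix n
      have "(\<Sum>t<T. ennreal (a n t)) \<le> (\<Sum>t. ennreal (a n t))"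
        by (intro sum_le_suminf) (auto intro: summableI)
      also have "\<dots> = payoff E r p e (ss n)" unfolding payoff_def a_def S_def ..
      also have "\<dots> \<le> b n" using b by blast
      finally show "(\<Sum>t<T. ennreal (a n t)) \<le> b n" .
    qed
  qed
  have "payoff E r p e \<sigma> = (\<Sum>t. ennreal (a' t))" unfolding payoff_def a'_def S_def ..
  also have "\<dots> = (SUP T. \<Sum>t<T. ennreal (a' t))" by (rule suminf_eq_SUP)
  also have "\<dots> \<le> B" by (intro SUP_least part)
  finally show ?thesis .
qed

fun wok :: "'v set set \<Rightarrow> 'v \<Rightarrow> 'v list \<Rightarrow> bool" where
  "wok E u [] = True"
| "wok E u (w # ws) = ({u, w} \<in> E \<and> wok E w ws)"

fun wedges :: "'v \<Rightarrow> 'v list \<Rightarrow> 'v set set" where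
  "wedges u [] = {}"
| "wedges u (w # ws) = insert {u, w} (wedges w ws)"

lemma wok_append: "wok E u (xs @ ys) \<longleftrightarrow> wok E u xs \<and> wok E (last (u # xs)) ys"
  by (induction xs arbitrary: u) auto

lemma wedges_append: "wedges u (xs @ ys) = wedges u xs \<union> wedges (last (u # xs)) ys"
  by (induction xs arbitrary: u) auto

lemma last_append_Cons: "last (u # xs @ ys) = last (last (u # xs) # ys)"
  by (induction xs arbitrary: u) auto

lemma wok_nth: "wok E u ws \<Longrightarrow> k < length ws \<Longrightarrow> {(u # ws) ! k, ws ! k} \<in> E"
proof (induction ws arbitrary: u k)
  case Nil then show ?case by simp
next
  case (Cons w ws)
  then show ?case by (cases k) auto
qed

lemma last_take_nth: "k \<le> length ws \<Longrightarrow> last (u # take k ws) = (u # ws) ! k"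
proof (induction ws arbitrary: u k)
  case Nil then show ?case by simp
next
  case (Cons w ws)
  then show ?case by (cases k) auto
qed

lemma wedges_take_Suc:
  assumes "k < length ws"
  shows "wedges u (take (Suc k) ws) = insert {(u # ws) ! k, ws ! k} (wedges u (take k ws))"
proof -
  have "take (Suc k) ws = take k ws @ [ws ! k]" using assms by (simp add: take_Suc_conv_app_nth)
  then show ?thesis using last_take_nth[of k ws u] assms by (simp add: wedges_append)
qed

definition Rg :: "'v set set \<Rightarrow> ('v \<times> 'v) set" where
  "Rg E = {(u, w). {u, w} \<in> E}"

lemma path_exists: "(x, y) \<in> (Rg E)\<^sup>* \<Longrightarrow> \<exists>ps. wok E x ps \<and> last (x # ps) = y"
proof (induction rule: rtrancl_induct)
  case base
  show ?case by (rule exI[of _ "[]"]) simp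
next
  case (step y z)
  then obtain ps where "wok E x ps" "last (x # ps) = y" by blast
  moreover have "{y, z} \<in> E" using step(2) by (simp add: Rg_def)
  ultimately show ?case by (intro exI[of _ "ps @ [z]"]) (simp add: wok_append)
qed

lemma Rg_sym: "(x, y) \<in> (Rg E)\<^sup>* \<Longrightarrow> (y, x) \<in> (Rg E)\<^sup>*"
proof (induction rule: rtrancl_induct)
  case base then show ?case by simp
next
  case (step y z)
  have "(z, y) \<in> Rg E" using step(2) by (simp add: Rg_def insert_commute)
  then show ?case using step(3) by (rule converse_rtrancl_into_rtrancl)
qed

lemma cover_walk_aux:
  assumes g: "graph_ok V E r" and u: "u \<in> V" and F: "finite F" "F \<subseteq> E"
  shows "\<exists>ws. wok E u ws \<and> last (u # ws) = u \<and> F \<subseteq> wedges u ws"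
  using F
proof (induction F rule: finite_induct)
  case empty
  show ?case by (rule exI[of _ "[]"]) simp
next
  case (insert e F)
  then obtain ws where ws: "wok E u ws" "last (u # ws) = u" "F \<subseteq> wedges u ws" by auto
  have eE: "e \<in> E" using insert.prems by blast
  then obtain a b where ab: "e = {a, b}" "a \<in> V" "b \<in> V" using g unfolding graph_ok_def by blast
  have reach: "\<forall>v\<in>V. (r, v) \<in> (Rg E)\<^sup>*" using g unfolding graph_ok_def Rg_def by simp
  have "(u, r) \<in> (Rg E)\<^sup>*" using reach u by (blast intro: Rg_sym)
  then have ua: "(u, a) \<in> (Rg E)\<^sup>*" using reach ab(2) by (blast intro: rtrancl_trans)
  have "(b, r) \<in> (Rg E)\<^sup>*" using reach ab(3) by (blast intro: Rg_sym)
  then have bu: "(b, u) \<in> (Rg E)\<^sup>*" using reach u by (blast intro: rtrancl_trans)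
  obtain ps1 where ps1: "wok E u ps1" "last (u # ps1) = a" using path_exists[OF ua] by blast
  obtain ps2 where ps2: "wok E b ps2" "last (b # ps2) = u" using path_exists[OF bu] by blast
  define ws' where "ws' = ws @ ps1 @ [b] @ ps2"
  have l1: "last (u # ws @ ps1) = a" by (simp only: last_append_Cons ws(2) ps1(2))
  have l2: "last (u # ws @ ps1 @ [b]) = b" by simp
  have "wok E u ws'" unfolding ws'_def
    using ws(1,2) ps1 ps2 eE ab(1) l1
    by (simp add: wok_append last_append_Cons del: append_assoc)
  moreover have "last (u # ws') = u" unfolding ws'_def using ps2(2)
    by (simp add: last_append_Cons del: append_assoc)
  moreover have "insert e F \<subseteq> wedges u ws'"
  proof -
    have "wedges u ws' = wedges u ws \<union> wedges u ps1 \<union> wedges a [b] \<union> wedges b ps2"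
      unfolding ws'_def using ws(2) ps1(2) by (simp add: wedges_append last_append_Cons Un_assoc)
    then show ?thesis using ws(3) ab(1) by auto
  qed
  ultimately show ?case by blast
qed

lemma cover_walk:
  assumes g: "graph_ok V E r" and u: "u \<in> V"
  shows "\<exists>ws. wok E u ws \<and> E \<subseteq> wedges u ws"
  using cover_walk_aux[OF g u graph_finite(2)[OF g] subset_refl] by blast

fun mvs :: "'v \<Rightarrow> 'v hist \<Rightarrow> nat" where
  "mvs u [] = 0"
| "mvs u ((A, w) # h) = (if u = w then 0 else 1) + mvs w h"

lemma cur_pos_Nil[simp]: "cur_pos u [] = u"
  by (simp add: cur_pos_def)

lemma cur_pos_Cons[simp]: "cur_pos u ((A, w) # h) = cur_pos w h"
  by (simp add: cur_pos_def)

lemma cur_pos_append: "cur_pos u (h1 @ h2) = cur_pos (cur_pos u h1) h2"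
proof (induction h1 arbitrary: u)
  case Nil then show ?case by simp
next
  case (Cons x h1)
  obtain A w where "x = (A, w)" by (cases x)
  then show ?case using Cons by simp
qed

lemma traversed_append: "traversed u (h1 @ h2) = traversed u h1 \<union> traversed (cur_pos u h1) h2"
proof (induction h1 arbitrary: u)
  case Nil then show ?case by simp
next
  case (Cons x h1)
  obtain A w where "x = (A, w)" by (cases x)
  then show ?case using Cons by auto
qed

lemma mvs_append: "mvs u (h1 @ h2) = mvs u h1 + mvs (cur_pos u h1) h2"
proof (induction h1 arbitrary: u)
  case Nil then show ?case by simp
next
  case (Cons x h1)
  obtain A w where "x = (A, w)" by (cases x)
  then show ?case using Cons by simp
qed

definition tu :: "'v \<Rightarrow> nat \<Rightarrow> 'v hist \<Rightarrow> 'v" where "tu r T h = cur_pos r (take T h)"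
definition tk :: "'v \<Rightarrow> nat \<Rightarrow> 'v hist \<Rightarrow> nat" where "tk r T h = mvs (tu r T h) (drop T h)"
definition tnext :: "'v \<Rightarrow> ('v \<Rightarrow> 'v list) \<Rightarrow> nat \<Rightarrow> 'v hist \<Rightarrow> 'v set set \<Rightarrow> 'v" where
  "tnext r W T h A = (if tk r T h < length (W (tu r T h)) \<and> {cur_pos r h, W (tu r T h) ! tk r T h} \<in> A
      then W (tu r T h) ! tk r T h else cur_pos r h)"
definition tour :: "'v \<Rightarrow> ('v \<Rightarrow> 'v list) \<Rightarrow> 'v strat \<Rightarrow> nat \<Rightarrow> 'v strat" where
  "tour r W \<sigma> T h A = (if length h < T then \<sigma> h A else return_pmf (tnext r W T h A))"

lemma tour_strategy:
  assumes "searcher_strategy E r \<sigma>"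
  shows "searcher_strategy E r (tour r W \<sigma> T)"
  using assms unfolding searcher_strategy_def tour_def tnext_def by auto

lemma tour_hist_le:
  "t \<le> T \<Longrightarrow> hist_pmf E p (tour r W \<sigma> T) t = hist_pmf E p \<sigma> t"
proof (induction t)
  case 0 then show ?case by simp
next
  case (Suc t)
  then have IH: "hist_pmf E p (tour r W \<sigma> T) t = hist_pmf E p \<sigma> t" by simp
  show ?case unfolding hist_pmf.simps(2) IH
  proof (intro bind_pmf_cong refl)
    fix h A assume h: "h \<in> set_pmf (hist_pmf E p \<sigma> t)"
    then have "length h < T" using set_hist_length Suc.prems by fastforce
    then show "map_pmf (\<lambda>v. h @ [(A, v)]) (tour r W \<sigma> T h A) = map_pmf (\<lambda>v. h @ [(A, v)]) (\<sigma> h A)"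
      by (simp add: tour_def)
  qed
qed

lemma cur_pos_tu: "cur_pos r h = cur_pos (tu r T h) (drop T h)"
  unfolding tu_def by (metis append_take_drop_id cur_pos_append)

lemma traversed_split: "traversed r h = traversed r (take T h) \<union> traversed (tu r T h) (drop T h)"
  unfolding tu_def by (metis append_take_drop_id traversed_append)

lemma tu_snoc: "T \<le> length h \<Longrightarrow> tu r T (h @ [x]) = tu r T h"
  unfolding tu_def by simp

lemma drop_snoc: "T \<le> length h \<Longrightarrow> drop T (h @ [x]) = drop T h @ [x]"
  by simp

lemma tk_snoc: "T \<le> length h \<Longrightarrow> tk r T (h @ [(A, v)]) = tk r T h + (if cur_pos r h = v then 0 else 1)"
  unfolding tk_def using cur_pos_tu[of r h T] by (simp add: tu_snoc mvs_append)

lemma trav_snoc: "T \<le> length h \<Longrightarrow>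
   traversed (tu r T (h @ [(A, v)])) (drop T (h @ [(A, v)])) =
   traversed (tu r T h) (drop T h) \<union> (if cur_pos r h = v then {} else {{cur_pos r h, v}})"
  using cur_pos_tu[of r h T] by (simp add: tu_snoc traversed_append)

lemma take_snoc_T: "T \<le> length h \<Longrightarrow> take T (h @ [x]) = take T h"
  by simp

lemma tour_inv:
  assumes g: "graph_ok V E r" and s: "searcher_strategy E r \<sigma>" and Wok: "\<forall>u\<in>V. wok E u (W u)"
  shows "h \<in> set_pmf (hist_pmf E p (tour r W \<sigma> T) (T + d)) \<Longrightarrow>
     tk r T h \<le> length (W (tu r T h)) \<and> cur_pos r h = (tu r T h # W (tu r T h)) ! tk r T h \<and>
     wedges (tu r T h) (take (tk r T h) (W (tu r T h))) \<subseteq> traversed (tu r T h) (drop T h)"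
proof (induction d arbitrary: h)
  case 0
  then have "length h = T" by (simp add: set_hist_length)
  then show ?case by (simp add: tk_def tu_def)
next
  case (Suc d)
  let ?\<tau> = "tour r W \<sigma> T"
  from Suc.prems obtain h0 A v where h0: "h0 \<in> set_pmf (hist_pmf E p ?\<tau> (T + d))"
    "A \<in> set_pmf (active_pmf E p)" "v \<in> set_pmf (?\<tau> h0 A)" "h = h0 @ [(A, v)]" by (auto simp: hist_pmf.simps(2))
  have len: "length h0 = T + d" using h0(1) by (simp add: set_hist_length)
  then have TL: "T \<le> length h0" by simp
  have vdef: "v = tnext r W T h0 A" using h0(3) len by (simp add: tour_def)
  note IH = Suc.IH[OF h0(1)]
  define u where "u = tu r T h0"
  define k where "k = tk r T h0"
  define c where "c = cur_pos r h0"
  define ws where "ws = W u"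
  have uV: "u \<in> V"
  proof -
    have "h0 \<in> Hs E V (T + d)" using set_hist_Hs[OF g tour_strategy[OF s]] h0(1) by (rule subsetD)
    then have "set h0 \<subseteq> Pow E \<times> V" unfolding Hs_def by simp
    then have "set (take T h0) \<subseteq> Pow E \<times> V" using set_take_subset by (rule order_trans[rotated])
    then have "cur_pos r (take T h0) \<in> V" by (rule cur_pos_in_V[OF graph_finite(3)[OF g]])
    then show ?thesis unfolding u_def tu_def .
  qed
  have wok: "wok E u ws" using Wok uV unfolding ws_def by blast
  have IH': "k \<le> length ws" "c = (u # ws) ! k" "wedges u (take k ws) \<subseteq> traversed u (drop T h0)"
    using IH unfolding u_def k_def c_def ws_def by auto
  have tuh: "tu r T h = u" unfolding h0(4) u_def using TL by (rule tu_snoc)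
  show ?case
  proof (cases "k < length ws \<and> {c, ws ! k} \<in> A")
    case True
    then have v: "v = ws ! k" unfolding vdef tnext_def u_def k_def c_def ws_def by simp
    have cE: "{c, ws ! k} \<in> E" using wok_nth[OF wok] True IH'(2) by simp
    have cv: "c \<noteq> v" using graph_edge_V(3)[OF g cE] v by simp
    have tkh: "tk r T h = Suc k" unfolding h0(4) using tk_snoc[OF TL, of r A v] cv unfolding k_def c_def by simp
    have "wedges u (take (Suc k) ws) = insert {c, v} (wedges u (take k ws))"
      using wedges_take_Suc[of k ws u] True IH'(2) v by simp
    moreover have "traversed u (drop T h) = traversed u (drop T h0) \<union> {{c, v}}"
      using trav_snoc[OF TL, of r A v] cv unfolding h0(4) u_def c_def by (simp add: tu_snoc[OF TL])
    ultimately have g3: "wedges u (take (Suc k) ws) \<subseteq> traversed u (drop T h)" using IH'(3) by blast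
    have g1: "Suc k \<le> length ws" using True by simp
    have g2: "cur_pos r h = (u # ws) ! Suc k" using v h0(4) by simp
    show ?thesis unfolding tuh tkh ws_def[symmetric] using g1 g2 g3 by blast
  next
    case False
    then have v: "v = c" unfolding vdef tnext_def u_def k_def c_def ws_def by auto
    have tkh: "tk r T h = k" unfolding h0(4) using tk_snoc[OF TL, of r A v] v unfolding k_def c_def by simp
    have "traversed u (drop T h) = traversed u (drop T h0)"
      using trav_snoc[OF TL, of r A v] v unfolding h0(4) u_def c_def by (simp add: tu_snoc[OF TL])
    then have g3: "wedges u (take k ws) \<subseteq> traversed u (drop T h)" using IH'(3) by simp
    have g2: "cur_pos r h = (u # ws) ! k" using v h0(4) IH'(2) by simp
    show ?thesis unfolding tuh tkh ws_def[symmetric] using IH'(1) g2 g3 by blast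
  qed
qed

lemma active_marginal:
  assumes "finite E" "e \<in> E"
  shows "map_pmf (\<lambda>A. e \<in> A) (active_pmf E p) = bernoulli_pmf (p e)"
proof -
  have "map_pmf (\<lambda>A. e \<in> A) (active_pmf E p) =
        map_pmf (\<lambda>f. f e) (Pi_pmf E False (\<lambda>e. bernoulli_pmf (p e)))"
    unfolding active_pmf_def map_pmf_comp using assms(2) by (intro map_pmf_cong) auto
  also have "\<dots> = bernoulli_pmf (p e)"
    using Pi_pmf_component[OF assms(1), of e False "\<lambda>e. bernoulli_pmf (p e)"] assms(2) by simp
  finally show ?thesis .
qed

lemma take_in_V:
  assumes g: "graph_ok V E r" and s: "searcher_strategy E r \<rho>" and h: "h \<in> set_pmf (hist_pmf E p \<rho> t)"
  shows "cur_pos r (take T h) \<in> V"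
proof -
  have "h \<in> Hs E V t" using set_hist_Hs[OF g s] h by (rule subsetD)
  then have "set h \<subseteq> Pow E \<times> V" unfolding Hs_def by simp
  then have "set (take T h) \<subseteq> Pow E \<times> V" using set_take_subset by (rule order_trans[rotated])
  then show ?thesis by (rule cur_pos_in_V[OF graph_finite(3)[OF g]])
qed

locale tour_setup =
  fixes V :: "'v set" and E :: "'v set set" and r :: 'v and p :: "'v set \<Rightarrow> real"
    and W :: "'v \<Rightarrow> 'v list" and \<sigma> :: "'v strat" and T :: nat and f :: "'v set"
  assumes g: "graph_ok V E r"
    and pE: "\<forall>e\<in>E. 0 < p e \<and> p e \<le> 1"
    and Wok: "\<forall>u\<in>V. wok E u (W u) \<and> E \<subseteq> wedges u (W u)"
    and s: "searcher_strategy E r \<sigma>"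
    and fE: "f \<in> E"
begin

definition "\<tau> = tour r W \<sigma> T"
definition "q = Min (p ` E)"
definition "\<theta> = 1 - q / 2"
definition "Lmax = Max ((\<lambda>u. length (W u)) ` V)"
definition "\<Phi> h = (if f \<in> traversed r (take T h) then 0 else 2 ^ (length (W (tu r T h)) - tk r T h) - 1 :: real)"

lemma finE: "finite E" using graph_finite[OF g] by simp

lemma q_pos: "0 < q"
proof -
  have ne: "E \<noteq> {}" using fE by blast
  show "0 < q" unfolding q_def using finE ne pE by (subst Min_gr_iff) auto
qed

lemma q_le: "e \<in> E \<Longrightarrow> q \<le> p e"
  unfolding q_def using finE by (intro Min_le) auto

lemma q1: "q \<le> 1" using q_le[OF fE] pE fE by force

lemma \<theta>_bounds: "0 \<le> \<theta>" "\<theta> < 1" using q_pos q1 unfolding \<theta>_def by auto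

lemma \<tau>_strat: "searcher_strategy E r \<tau>" unfolding \<tau>_def by (rule tour_strategy[OF s])

lemma Wok': "\<forall>u\<in>V. wok E u (W u)" using Wok by blast

lemma \<Phi>_nonneg: "0 \<le> \<Phi> h"
  unfolding \<Phi>_def by (simp add: one_le_power)

lemma tu_V: "h \<in> set_pmf (hist_pmf E p \<tau> t) \<Longrightarrow> tu r T h \<in> V"
  unfolding tu_def using take_in_V[OF g \<tau>_strat] by blast

lemma prob_le_\<Phi>:
  assumes h: "h \<in> set_pmf (hist_pmf E p \<tau> (T + d))" and nt: "f \<notin> traversed r h"
  shows "1 \<le> \<Phi> h"
proof -
  note inv = tour_inv[OF g s Wok', of h p T d, folded \<tau>_def, OF h]
  define u where "u = tu r T h"
  define k where "k = tk r T h"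
  have uV: "u \<in> V" unfolding u_def using tu_V[OF h] .
  have nt1: "f \<notin> traversed r (take T h)" and nt2: "f \<notin> traversed u (drop T h)"
    using nt traversed_split[of r h T] unfolding u_def by auto
  have kl: "k < length (W u)"
  proof (rule ccontr)
    assume "\<not> k < length (W u)"
    then have "take k (W u) = W u" by simp
    then have "E \<subseteq> traversed u (drop T h)" using inv Wok uV unfolding u_def k_def by force
    then show False using fE nt2 by blast
  qed
  then have "2 ^ 1 \<le> (2::real) ^ (length (W u) - k)" by (intro power_increasing) auto
  then show ?thesis using nt1 unfolding \<Phi>_def u_def k_def by simp
qed

lemma step_bound:
  assumes h: "h \<in> set_pmf (hist_pmf E p \<tau> (T + d))"
  shows "(\<integral>\<^sup>+A. ennreal (\<Phi> (h @ [(A, tnext r W T h A)])) \<partial>active_pmf E p) \<le> ennreal \<theta> * ennreal (\<Phi> h)"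
proof -
  note inv = tour_inv[OF g s Wok', of h p T d, folded \<tau>_def, OF h]
  have TL: "T \<le> length h" using set_hist_length[OF h] by simp
  define u where "u = tu r T h"
  define k where "k = tk r T h"
  define c where "c = cur_pos r h"
  define ws where "ws = W u"
  have uV: "u \<in> V" unfolding u_def using tu_V[OF h] .
  have wok: "wok E u ws" using Wok uV unfolding ws_def by blast
  have inv': "k \<le> length ws" "c = (u # ws) ! k" using inv unfolding u_def k_def c_def ws_def by auto
  have tu': "tu r T (h @ [(A, v)]) = u" for A v unfolding u_def using TL by (rule tu_snoc)
  have tk': "tk r T (h @ [(A, v)]) = k + (if c = v then 0 else 1)" for A v
    unfolding k_def c_def using TL by (rule tk_snoc)
  have tr': "traversed r (take T (h @ [(A, v)])) = traversed r (take T h)" for A v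
    using TL by simp
  show ?thesis
  proof (cases "f \<in> traversed r (take T h)")
    case True
    then have "\<Phi> (h @ [(A, tnext r W T h A)]) = 0" for A unfolding \<Phi>_def tr' by simp
    then show ?thesis by simp
  next
    case nt: False
    show ?thesis
    proof (cases "k < length ws")
      case False
      then have "tnext r W T h A = c" for A unfolding tnext_def u_def k_def c_def ws_def by auto
      moreover have "k = length ws" using False inv'(1) by simp
      ultimately have "\<Phi> (h @ [(A, tnext r W T h A)]) = 0" for A
        unfolding \<Phi>_def tr' tu' tk' ws_def by simp
      then show ?thesis by simp
    next
      case True
      define ek where "ek = {c, ws ! k}"
      have ekE: "ek \<in> E" unfolding ek_def using wok_nth[OF wok True] inv'(2) by simp
      have cne: "c \<noteq> ws ! k" using graph_edge_V(3)[OF g ekE[unfolded ek_def]] .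
      define X :: real where "X = 2 ^ (length ws - Suc k)"
      have X1: "1 \<le> X" unfolding X_def by (simp add: one_le_power)
      have lk: "length ws - k = Suc (length ws - Suc k)" using True by simp
      have \<Phi>h: "\<Phi> h = 2 * X - 1"
      proof -
        show ?thesis using lk using nt unfolding \<Phi>_def X_def u_def k_def ws_def by simp
      qed
      define G where "G b = (if b then X - 1 else 2 * X - 1)" for b
      have \<Phi>A: "\<Phi> (h @ [(A, tnext r W T h A)]) = G (ek \<in> A)" for A
      proof (cases "ek \<in> A")
        case True
        then have "tnext r W T h A = ws ! k"
          using \<open>k < length ws\<close> unfolding tnext_def u_def k_def c_def ws_def ek_def by simp
        then show ?thesis using True cne nt unfolding \<Phi>_def tr' tu' tk' G_def X_def ws_def by simp
      next
        case False
        then have "tnext r W T h A = c"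
          unfolding tnext_def u_def k_def c_def ws_def ek_def by auto
        then show ?thesis using False nt unfolding \<Phi>_def tr' tu' tk' G_def X_def ws_def
          using lk[unfolded ws_def] by simp
      qed
      have pk: "q \<le> p ek" "p ek \<le> 1" "0 \<le> p ek" using q_le[OF ekE] pE ekE by auto
      have "(\<integral>\<^sup>+A. ennreal (\<Phi> (h @ [(A, tnext r W T h A)])) \<partial>active_pmf E p) =
            (\<integral>\<^sup>+b. ennreal (G b) \<partial>map_pmf (\<lambda>A. ek \<in> A) (active_pmf E p))"
        by (simp add: \<Phi>A)
      also have "\<dots> = (\<integral>\<^sup>+b. ennreal (G b) \<partial>bernoulli_pmf (p ek))"
        by (simp add: active_marginal[OF finE ekE])
      also have "\<dots> = ennreal (G True) * ennreal (p ek) + ennreal (G False) * ennreal (1 - p ek)"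
        using pk by (simp add: nn_integral_bernoulli_pmf)
      also have "\<dots> = ennreal ((X - 1) * p ek + (2 * X - 1) * (1 - p ek))"
        using X1 pk by (simp add: G_def ennreal_mult ennreal_plus)
      also have "\<dots> \<le> ennreal (\<theta> * (2 * X - 1))"
      proof (rule ennreal_leI)
        have "(q - p ek) * X \<le> 0" using pk X1 by (intro mult_nonpos_nonneg) auto
        then show "(X - 1) * p ek + (2 * X - 1) * (1 - p ek) \<le> \<theta> * (2 * X - 1)"
          unfolding \<theta>_def using q_pos by (simp add: algebra_simps)
      qed
      also have "\<dots> = ennreal \<theta> * ennreal (\<Phi> h)"
        using \<theta>_bounds X1 by (simp add: \<Phi>h ennreal_mult)
      finally show ?thesis .
    qed
  qed
qed

end

context tour_setup
begin

definition "Pexp t = (\<integral>\<^sup>+h. ennreal (\<Phi> h) \<partial>hist_pmf E p \<tau> t)"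
definition "\<pi> t = measure_pmf.prob (hist_pmf E p \<sigma> t) {h. f \<notin> traversed r h}"

lemma Pexp_step: "Pexp (Suc (T + d)) \<le> ennreal \<theta> * Pexp (T + d)"
proof -
  have "Pexp (Suc (T + d)) = (\<integral>\<^sup>+h. (\<integral>\<^sup>+h'. ennreal (\<Phi> h') \<partial>(bind_pmf (active_pmf E p)
      (\<lambda>A. map_pmf (\<lambda>v. h @ [(A, v)]) (\<tau> h A)))) \<partial>hist_pmf E p \<tau> (T + d))"
    unfolding Pexp_def hist_pmf.simps(2) by (simp only: nn_integral_bind_pmf)
  also have "\<dots> \<le> (\<integral>\<^sup>+h. ennreal \<theta> * ennreal (\<Phi> h) \<partial>hist_pmf E p \<tau> (T + d))"
  proof (intro nn_integral_mono_AE)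
    show "AE h in measure_pmf (hist_pmf E p \<tau> (T + d)).
      (\<integral>\<^sup>+h'. ennreal (\<Phi> h') \<partial>(bind_pmf (active_pmf E p) (\<lambda>A. map_pmf (\<lambda>v. h @ [(A, v)]) (\<tau> h A))))
        \<le> ennreal \<theta> * ennreal (\<Phi> h)"
      unfolding AE_measure_pmf_iff
    proof
      fix h assume h: "h \<in> set_pmf (hist_pmf E p \<tau> (T + d))"
      have "length h = T + d" using set_hist_length[OF h] .
      then have "\<tau> h A = return_pmf (tnext r W T h A)" for A unfolding \<tau>_def tour_def by simp
      then have "(\<integral>\<^sup>+h'. ennreal (\<Phi> h') \<partial>(bind_pmf (active_pmf E p) (\<lambda>A. map_pmf (\<lambda>v. h @ [(A, v)]) (\<tau> h A))))
          = (\<integral>\<^sup>+A. ennreal (\<Phi> (h @ [(A, tnext r W T h A)])) \<partial>active_pmf E p)"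
        by simp
      then show "(\<integral>\<^sup>+h'. ennreal (\<Phi> h') \<partial>(bind_pmf (active_pmf E p) (\<lambda>A. map_pmf (\<lambda>v. h @ [(A, v)]) (\<tau> h A))))
        \<le> ennreal \<theta> * ennreal (\<Phi> h)" using step_bound[OF h] by simp
    qed
  qed
  also have "\<dots> = ennreal \<theta> * Pexp (T + d)" unfolding Pexp_def by (rule nn_integral_cmult) simp
  finally show ?thesis .
qed

lemma Pexp_bound: "Pexp (T + d) \<le> ennreal \<theta> ^ d * Pexp T"
proof (induction d)
  case 0 then show ?case by simp
next
  case (Suc d)
  have "Pexp (T + Suc d) \<le> ennreal \<theta> * Pexp (T + d)" using Pexp_step[of d] by simp
  also have "\<dots> \<le> ennreal \<theta> * (ennreal \<theta> ^ d * Pexp T)" by (intro mult_left_mono Suc.IH) simp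
  finally show ?case by (simp add: mult.assoc)
qed

lemma Lmax_ge: "u \<in> V \<Longrightarrow> length (W u) \<le> Lmax"
  unfolding Lmax_def using graph_finite(1)[OF g] by (intro Max_ge) auto

lemma Pexp_T: "Pexp T \<le> ennreal (2 ^ Lmax - 1) * ennreal (\<pi> T)"
proof -
  define S where "S = {h. f \<notin> traversed r h}"
  have hT: "hist_pmf E p \<tau> T = hist_pmf E p \<sigma> T" unfolding \<tau>_def by (rule tour_hist_le) simp
  have "Pexp T \<le> (\<integral>\<^sup>+h. ennreal (2 ^ Lmax - 1) * indicator S h \<partial>hist_pmf E p \<tau> T)"
    unfolding Pexp_def
  proof (intro nn_integral_mono_AE)
    show "AE h in measure_pmf (hist_pmf E p \<tau> T). ennreal (\<Phi> h) \<le> ennreal (2 ^ Lmax - 1) * indicator S h"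
      unfolding AE_measure_pmf_iff
    proof
      fix h assume h: "h \<in> set_pmf (hist_pmf E p \<tau> T)"
      have len: "length h = T" using set_hist_length[OF h] .
      have uV: "tu r T h \<in> V" using tu_V[OF h] .
      show "ennreal (\<Phi> h) \<le> ennreal (2 ^ Lmax - 1) * indicator S h"
      proof (cases "h \<in> S")
        case False
        then show ?thesis using len unfolding \<Phi>_def S_def by simp
      next
        case True
        have "(2::real) ^ (length (W (tu r T h)) - tk r T h) \<le> 2 ^ Lmax"
          using Lmax_ge[OF uV] by (intro power_increasing) auto
        then have "\<Phi> h \<le> 2 ^ Lmax - 1" unfolding \<Phi>_def by simp
        then show ?thesis using True by (simp add: ennreal_leI)
      qed
    qed
  qed
  also have "\<dots> = ennreal (2 ^ Lmax - 1) * emeasure (measure_pmf (hist_pmf E p \<sigma> T)) S"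
    unfolding hT by (rule nn_integral_cmult_indicator) simp
  also have "\<dots> = ennreal (2 ^ Lmax - 1) * ennreal (\<pi> T)"
    unfolding \<pi>_def S_def by (simp add: measure_pmf.emeasure_eq_measure)
  finally show ?thesis .
qed

lemma prob_tau: "ennreal (measure_pmf.prob (hist_pmf E p \<tau> (T + d)) {h. f \<notin> traversed r h}) \<le> Pexp (T + d)"
proof -
  define S where "S = {h. f \<notin> traversed r h}"
  have "ennreal (measure_pmf.prob (hist_pmf E p \<tau> (T + d)) S) = (\<integral>\<^sup>+h. indicator S h \<partial>hist_pmf E p \<tau> (T + d))"
    by (simp add: measure_pmf.emeasure_eq_measure[symmetric])
  also have "\<dots> \<le> Pexp (T + d)" unfolding Pexp_def
  proof (intro nn_integral_mono_AE)
    show "AE h in measure_pmf (hist_pmf E p \<tau> (T + d)). indicator S h \<le> ennreal (\<Phi> h)"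
      unfolding AE_measure_pmf_iff
    proof
      fix h assume h: "h \<in> set_pmf (hist_pmf E p \<tau> (T + d))"
      show "indicator S h \<le> ennreal (\<Phi> h)"
      proof (cases "h \<in> S")
        case True
        then have "1 \<le> \<Phi> h" using prob_le_\<Phi>[OF h] unfolding S_def by simp
        then show ?thesis using True by (simp add: ennreal_leI)
      qed simp
    qed
  qed
  finally show ?thesis unfolding S_def .
qed

lemma tour_payoff:
  "payoff E r p f \<tau> \<le> (\<Sum>t<T. ennreal (\<pi> t)) + ennreal ((2 ^ Lmax - 1) / (1 - \<theta>)) * ennreal (\<pi> T)"
proof -
  define a where "a t = measure_pmf.prob (hist_pmf E p \<tau> t) {h. f \<notin> traversed r h}" for t
  define K where "K = ennreal (2 ^ Lmax - 1) * ennreal (\<pi> T)"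
  have "payoff E r p f \<tau> = (\<Sum>t. ennreal (a t))" unfolding payoff_def a_def ..
  also have "\<dots> = (\<Sum>d. ennreal (a (d + T))) + (\<Sum>t<T. ennreal (a t))"
    by (rule suminf_offset) (auto intro: summableI)
  also have "(\<Sum>t<T. ennreal (a t)) = (\<Sum>t<T. ennreal (\<pi> t))"
  proof (intro sum.cong refl)
    fix t assume "t \<in> {..<T}"
    then have "hist_pmf E p \<tau> t = hist_pmf E p \<sigma> t" unfolding \<tau>_def by (intro tour_hist_le) simp
    then show "ennreal (a t) = ennreal (\<pi> t)" unfolding a_def \<pi>_def by simp
  qed
  also have "(\<Sum>d. ennreal (a (d + T))) \<le> (\<Sum>d. ennreal \<theta> ^ d * K)"
  proof (intro suminf_le allI)
    fix d
    have "ennreal (a (d + T)) \<le> Pexp (T + d)" using prob_tau[of d] unfolding a_def by (simp add: add.commute)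
    also have "\<dots> \<le> ennreal \<theta> ^ d * Pexp T" by (rule Pexp_bound)
    also have "\<dots> \<le> ennreal \<theta> ^ d * K" unfolding K_def by (intro mult_left_mono Pexp_T) simp
    finally show "ennreal (a (d + T)) \<le> ennreal \<theta> ^ d * K" .
  qed (auto intro: summableI)
  also have "(\<Sum>d. ennreal \<theta> ^ d * K) = (\<Sum>d. ennreal (\<theta> ^ d)) * K"
    by (simp add: ennreal_suminf_multc ennreal_power \<theta>_bounds)
  also have "(\<Sum>d. ennreal (\<theta> ^ d)) = ennreal (1 / (1 - \<theta>))"
    using \<theta>_bounds by (intro suminf_ennreal_eq geometric_sums) auto
  also have "ennreal (1 / (1 - \<theta>)) * K = ennreal ((2 ^ Lmax - 1) / (1 - \<theta>)) * ennreal (\<pi> T)"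
  proof -
    have "0 \<le> (2::real) ^ Lmax - 1" by (simp add: one_le_power)
    then show ?thesis unfolding K_def using \<theta>_bounds
      by (simp add: ennreal_mult[symmetric] mult.assoc[symmetric] divide_nonneg_pos)
  qed
  finally show ?thesis by (simp add: add.commute)
qed

end

lemma approx_strat:
  assumes g: "graph_ok V E r" and pE: "\<forall>e\<in>E. 0 < p e \<and> p e \<le> 1" and s: "searcher_strategy E r \<sigma>"
    and \<epsilon>: "\<epsilon> > 0" and Ene: "E \<noteq> {}"
  shows "\<exists>\<sigma>'. searcher_strategy E r \<sigma>' \<and> (\<forall>e\<in>E. payoff E r p e \<sigma>' < \<top>) \<and>
     (\<forall>e\<in>E. payoff E r p e \<sigma> < \<top> \<longrightarrow> payoff E r p e \<sigma>' \<le> payoff E r p e \<sigma> + ennreal \<epsilon>)"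
proof -
  note fin = graph_finite[OF g]
  define W where "W u = (SOME ws. wok E u ws \<and> E \<subseteq> wedges u ws)" for u
  have Wok: "\<forall>u\<in>V. wok E u (W u) \<and> E \<subseteq> wedges u (W u)"
  proof
    fix u assume "u \<in> V"
    from cover_walk[OF g this] show "wok E u (W u) \<and> E \<subseteq> wedges u (W u)"
      unfolding W_def by (rule someI_ex)
  qed
  define K :: real where "K = (2 ^ Max ((\<lambda>u. length (W u)) ` V) - 1) / (1 - (1 - Min (p ` E) / 2))"
  have qpos: "0 < Min (p ` E)" using fin(2) Ene pE by (subst Min_gr_iff) auto
  have K0: "0 \<le> K" unfolding K_def using qpos by (intro divide_nonneg_pos) (auto simp: one_le_power)
  define \<pi> where "\<pi> e t = measure_pmf.prob (hist_pmf E p \<sigma> t) {h. e \<notin> traversed r h}" for e t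
  define F where "F = {e\<in>E. payoff E r p e \<sigma> < \<top>}"
  have finF: "finite F" unfolding F_def using fin(2) by simp
  have lim0: "\<pi> e \<longlonglongrightarrow> 0" if "e \<in> F" for e
  proof -
    have "(\<Sum>t. ennreal (\<pi> e t)) \<noteq> \<top>" using that unfolding F_def payoff_def \<pi>_def by (simp add: less_top)
    then have "summable (\<pi> e)" by (intro summable_suminf_not_top) (simp add: \<pi>_def)
    then show ?thesis by (rule summable_LIMSEQ_zero)
  qed
  have epsK: "0 < \<epsilon> / (K + 1)" using \<epsilon> K0 by simp
  have "eventually (\<lambda>T. \<forall>e\<in>F. \<pi> e T < \<epsilon> / (K + 1)) sequentially"
    using finF by (intro eventually_ball_finite ballI order_tendstoD(2)[OF lim0 epsK])
  then obtain T where T: "\<forall>e\<in>F. \<pi> e T < \<epsilon> / (K + 1)" by (auto simp: eventually_sequentially)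
  define \<sigma>' where "\<sigma>' = tour r W \<sigma> T"
  have bound: "payoff E r p e \<sigma>' \<le> (\<Sum>t<T. ennreal (\<pi> e t)) + ennreal K * ennreal (\<pi> e T)" if e: "e \<in> E" for e
  proof -
    interpret ts: tour_setup V E r p W \<sigma> T e
      using g pE Wok s e by unfold_locales auto
    show ?thesis using ts.tour_payoff
      unfolding ts.\<tau>_def ts.\<pi>_def ts.Lmax_def ts.\<theta>_def ts.q_def K_def \<sigma>'_def \<pi>_def .
  qed
  show ?thesis
  proof (intro exI[of _ \<sigma>'] conjI ballI impI)
    show "searcher_strategy E r \<sigma>'" unfolding \<sigma>'_def by (rule tour_strategy[OF s])
  next
    fix e assume e: "e \<in> E"
    have "(\<Sum>t<T. ennreal (\<pi> e t)) + ennreal K * ennreal (\<pi> e T) =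
          ennreal ((\<Sum>t<T. \<pi> e t) + K * \<pi> e T)"
      using K0 by (simp add: \<pi>_def ennreal_mult ennreal_plus sum_nonneg)
    then show "payoff E r p e \<sigma>' < \<top>" using bound[OF e] by (simp add: le_less_trans)
  next
    fix e assume e: "e \<in> E" and fe: "payoff E r p e \<sigma> < \<top>"
    have eF: "e \<in> F" unfolding F_def using e fe by simp
    have "(\<Sum>t<T. ennreal (\<pi> e t)) \<le> payoff E r p e \<sigma>"
      unfolding payoff_def \<pi>_def by (intro sum_le_suminf) (auto intro: summableI)
    moreover have "ennreal K * ennreal (\<pi> e T) \<le> ennreal \<epsilon>"
    proof -
      have "K * \<pi> e T \<le> K * (\<epsilon> / (K + 1))" using T eF K0 by (intro mult_left_mono) auto
      also have "\<dots> \<le> \<epsilon>" using K0 \<epsilon> by (simp add: field_simps)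
      finally show ?thesis using K0 by (simp add: ennreal_mult[symmetric] \<pi>_def ennreal_leI)
    qed
    ultimately show "payoff E r p e \<sigma>' \<le> payoff E r p e \<sigma> + ennreal \<epsilon>"
      using bound[OF e] by (meson add_mono order_trans)
  qed
qed

theorem mainTheorem4:
  fixes V :: "'v set" and E :: "'v set set" and r :: 'v and p :: "'v set \<Rightarrow> real"
  assumes "graph_ok V E r"
    and "E \<noteq> {}"
    and "\<forall>e\<in>E. 0 < p e \<and> p e \<le> 1"
  shows "\<exists>x\<^sub>0 \<sigma>\<^sub>0. hider_strategy E x\<^sub>0 \<and> searcher_strategy E r \<sigma>\<^sub>0 \<and>
           (\<forall>x. hider_strategy E x \<longrightarrow> mixed_payoff E r p x \<sigma>\<^sub>0 \<le> mixed_payoff E r p x\<^sub>0 \<sigma>\<^sub>0) \<and>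
           (\<forall>\<sigma>. searcher_strategy E r \<sigma> \<longrightarrow> mixed_payoff E r p x\<^sub>0 \<sigma>\<^sub>0 \<le> mixed_payoff E r p x\<^sub>0 \<sigma>)"
proof -
  note g = assms(1) and Ene = assms(2) and pE = assms(3)
  note fin = graph_finite[OF g]
  define S where "S = {\<sigma>. searcher_strategy E r \<sigma>}"
  define G where "G e \<sigma> = payoff E r p e \<sigma>" for e \<sigma>
  have Sne: "S \<noteq> {}"
  proof -
    have "searcher_strategy E r (\<lambda>h A. return_pmf (cur_pos r h))" unfolding searcher_strategy_def by simp
    then show ?thesis unfolding S_def by blast
  qed
  have mix: "\<exists>s\<in>S. \<forall>e\<in>E. G e s = ennreal l * G e s1 + ennreal (1 - l) * G e s2"
    if "s1 \<in> S" "s2 \<in> S" "0 \<le> l" "l \<le> 1" for s1 s2 l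
  proof (intro bexI[of _ "kmix E p s1 s2 l"] ballI)
    show "kmix E p s1 s2 l \<in> S" using kmix_strategy[of E r s1 s2 p l] that(1,2) unfolding S_def by simp
    show "G e (kmix E p s1 s2 l) = ennreal l * G e s1 + ennreal (1 - l) * G e s2" for e
      unfolding G_def by (rule kmix_payoff[OF that(3,4)])
  qed
  have clos: "\<exists>s\<in>S. \<forall>e\<in>E. \<forall>b B. (\<forall>n. G e (ss n) \<le> b n) \<longrightarrow> b \<longlonglongrightarrow> B \<longrightarrow> G e s \<le> B"
    if ss: "\<forall>n. ss n \<in> S" for ss
  proof -
    have ss': "\<And>n. searcher_strategy E r (ss n)" using ss unfolding S_def by blast
    obtain \<sigma> \<phi> where \<sigma>: "searcher_strategy E r \<sigma>" "strict_mono \<phi>"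
      "\<forall>t h. (\<lambda>k. pmf (hist_pmf E p (ss (\<phi> k)) t) h) \<longlonglongrightarrow> pmf (hist_pmf E p \<sigma> t) h"
      using compact_strat[where ss=ss and p=p, OF g ss'] by blast
    show ?thesis
    proof (intro bexI[of _ \<sigma>] ballI allI impI)
      show "\<sigma> \<in> S" using \<sigma>(1) unfolding S_def by simp
      fix e b B assume b: "\<forall>n. G e (ss n) \<le> b n" and bB: "b \<longlonglongrightarrow> B"
      have limb: "(b \<circ> \<phi>) \<longlonglongrightarrow> B" using LIMSEQ_subseq_LIMSEQ[OF bB \<sigma>(2)] .
      have b\<phi>: "\<forall>n. payoff E r p e ((ss \<circ> \<phi>) n) \<le> (b \<circ> \<phi>) n" using b unfolding G_def by simp
      have ss\<phi>: "\<And>n. searcher_strategy E r ((ss \<circ> \<phi>) n)" using ss' by simp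
      have lim\<phi>: "\<forall>t h. (\<lambda>k. pmf (hist_pmf E p ((ss \<circ> \<phi>) k) t) h) \<longlonglongrightarrow> pmf (hist_pmf E p \<sigma> t) h"
        using \<sigma>(3) by (simp add: o_def)
      show "G e \<sigma> \<le> B" unfolding G_def by (rule payoff_lsc[OF g ss\<phi> \<sigma>(1) lim\<phi> b\<phi> limb])
    qed
  qed
  have approx: "\<exists>s'\<in>S. (\<forall>e\<in>E. G e s' < \<top>) \<and> (\<forall>e\<in>E. G e s < \<top> \<longrightarrow> G e s' \<le> G e s + ennreal \<epsilon>)"
    if sS: "s \<in> S" and eps: "\<epsilon> > 0" for s \<epsilon>
  proof -
    have s': "searcher_strategy E r s" using sS unfolding S_def by simp
    obtain \<sigma>' where \<sigma>': "searcher_strategy E r \<sigma>'" "\<forall>e\<in>E. payoff E r p e \<sigma>' < \<top>"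
      "\<forall>e\<in>E. payoff E r p e s < \<top> \<longrightarrow> payoff E r p e \<sigma>' \<le> payoff E r p e s + ennreal \<epsilon>"
      using approx_strat[OF g pE s' eps Ene] by blast
    show ?thesis by (rule bexI[of _ \<sigma>']) (use \<sigma>' in \<open>simp_all add: S_def G_def\<close>)
  qed
  have "\<exists>x s0. (\<forall>e\<in>E. 0 \<le> x e) \<and> sum x E = 1 \<and> s0 \<in> S \<and>
            (\<forall>s\<in>S. \<forall>e\<in>E. G e s0 \<le> (\<Sum>e'\<in>E. ennreal (x e') * G e' s))"
  proof (rule minimax_abstract[OF fin(2) Ene Sne])
    fix s1 s2 and l :: real assume "s1 \<in> S" "s2 \<in> S" "0 \<le> l" "l \<le> 1"
    then show "\<exists>s\<in>S. \<forall>e\<in>E. G e s = ennreal l * G e s1 + ennreal (1 - l) * G e s2" by (rule mix)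
  next
    fix ss :: "nat \<Rightarrow> 'v strat" assume "\<forall>n. ss n \<in> S"
    then show "\<exists>s\<in>S. \<forall>e\<in>E. \<forall>b B. (\<forall>n. G e (ss n) \<le> b n) \<longrightarrow> b \<longlonglongrightarrow> B \<longrightarrow> G e s \<le> B" by (rule clos)
  next
    fix s and \<epsilon> :: real assume "s \<in> S" "\<epsilon> > 0"
    then show "\<exists>s'\<in>S. (\<forall>e\<in>E. G e s' < \<top>) \<and> (\<forall>e\<in>E. G e s < \<top> \<longrightarrow> G e s' \<le> G e s + ennreal \<epsilon>)"
      by (rule approx)
  qed
  then obtain x s0 where x: "\<forall>e\<in>E. 0 \<le> x e" "sum x E = 1" and s0: "s0 \<in> S"
    and key: "\<forall>s\<in>S. \<forall>e\<in>E. G e s0 \<le> (\<Sum>e'\<in>E. ennreal (x e') * G e' s)"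
    by blast
  define F where "F e = (if e \<in> E then x e else 0)" for e
  have F0: "0 \<le> F e" for e using x(1) unfolding F_def by simp
  have F1: "(\<integral>\<^sup>+e. ennreal (F e) \<partial>count_space UNIV) = 1"
  proof -
    have "(\<integral>\<^sup>+e. ennreal (F e) \<partial>count_space UNIV) = (\<Sum>e\<in>E. ennreal (F e))"
      using fin(2) by (intro nn_integral_count_space') (auto simp: F_def)
    also have "\<dots> = ennreal (\<Sum>e\<in>E. F e)" using F0 by simp
    also have "(\<Sum>e\<in>E. F e) = 1" using x(2) unfolding F_def by simp
    finally show ?thesis by simp
  qed
  define x0 where "x0 = embed_pmf F"
  have px0: "pmf x0 e = F e" for e unfolding x0_def using pmf_embed_pmf[OF F0 F1] .
  have "set_pmf x0 = {e. F e \<noteq> 0}" unfolding x0_def by (rule set_embed_pmf[OF F0 F1])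
  then have hx0: "hider_strategy E x0" unfolding hider_strategy_def by (auto simp: F_def split: if_splits)
  have s0': "searcher_strategy E r s0" using s0 unfolding S_def by simp
  define v where "v = mixed_payoff E r p x0 s0"
  have mp: "mixed_payoff E r p x0 \<sigma> = (\<Sum>e'\<in>E. ennreal (x e') * G e' \<sigma>)" for \<sigma>
    unfolding mixed_payoff_def G_def px0 F_def by simp
  have sumx: "(\<Sum>e\<in>E. ennreal (x e)) = 1" using x by simp
  have gv: "G e s0 \<le> mixed_payoff E r p x0 \<sigma>" if "e \<in> E" "searcher_strategy E r \<sigma>" for e \<sigma>
    using key that unfolding S_def mp by blast
  show ?thesis
  proof (intro exI[of _ x0] exI[of _ s0] conjI allI impI)
    show "hider_strategy E x0" by (rule hx0)
    show "searcher_strategy E r s0" by (rule s0')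
  next
    fix y assume hy: "hider_strategy E y"
    have sumy: "(\<Sum>e\<in>E. ennreal (pmf y e)) = 1"
      using sum_pmf_eq_1[OF fin(2)] hy unfolding hider_strategy_def by simp
    have "mixed_payoff E r p y s0 = (\<Sum>e\<in>E. ennreal (pmf y e) * G e s0)"
      unfolding mixed_payoff_def G_def ..
    also have "\<dots> \<le> (\<Sum>e\<in>E. ennreal (pmf y e) * mixed_payoff E r p x0 s0)"
      by (intro sum_mono mult_left_mono gv s0') auto
    also have "\<dots> = mixed_payoff E r p x0 s0" using sumy by (simp add: sum_distrib_right[symmetric])
    finally show "mixed_payoff E r p y s0 \<le> mixed_payoff E r p x0 s0" .
  next
    fix \<sigma> assume h\<sigma>: "searcher_strategy E r \<sigma>"
    have "mixed_payoff E r p x0 s0 = (\<Sum>e\<in>E. ennreal (x e) * G e s0)" by (rule mp)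
    also have "\<dots> \<le> (\<Sum>e\<in>E. ennreal (x e) * mixed_payoff E r p x0 \<sigma>)"
      by (intro sum_mono mult_left_mono gv h\<sigma>) auto
    also have "\<dots> = mixed_payoff E r p x0 \<sigma>" using sumx by (simp add: sum_distrib_right[symmetric])
    finally show "mixed_payoff E r p x0 s0 \<le> mixed_payoff E r p x0 \<sigma>" .
  qed
qed

end
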